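(* Let $C,D\subseteq\mathbb{R}^n$, $F,G:\mathbb{R}^n\rightrightarrows\mathbb{R}^n$ define the hybrid system $\dot x\in F(x)$, $x\in C$; $x^+\in G(x)$, $x\in D$, satisfying the hybrid basic conditions (A1)–(A3) below, and let $\phi^\star$ be a $t$-complete solution of this system. Assume: (i) $G(D)\cap D=\emptyset$, $G(D)\subseteq C$, and $G$ is single-valued and proper; (ii) for all $x\in C\cap D$, $F(x)\cap T_C(x)=\emptyset$; (iii) for all $x\in C\cap G(D)$, $-F(x)\cap T_C(x)=\emptyset$; (iv) either $D$ is bounded or $\phi^\star$ is bounded. Then for every $\varepsilon>0$ there exists $s>0$ such that for any $t$-complete solution $\phi$ of the system satisfying (v) $\|\phi^\star(0,0)-\phi(0,0)\|<s$, and (vi) for all $(t,j)\in\operatorname{dom}\phi^\star$ there exists $(t,\tilde\jmath)\in\operatorname{dom}\phi$ with $\rho_{\mathcal A}(\phi^\star(t,j),\phi(t,\tilde\jmath))<s$, it holds that for every $(t,j)\in\operatorname{dom}\phi^\star$ there exists $(t',j')\in\operatorname{dom}\phi$ with $|t-t'|<\varepsilon$ and $\|\phi^\star(t,j)-\phi(t',j')\|<\varepsilon$.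
   Context: $\|\cdot\|$ is the Euclidean norm, $\mathcal B_s=\{x:\|x\|\le s\}$, $S_1+S_2=\{y_1+y_2:y_1\in S_1,y_2\in S_2\}$, $\operatorname{dom}F=\{x:F(x)\neq\emptyset\}$. Hybrid basic conditions: (A1) $C$ and $D$ are closed; (A2) $F$ is outer semicontinuous and locally bounded relative to $C$, $C\subseteq\operatorname{dom}F$, and $F(x)$ is convex for each $x\in C$; (A3) $G$ is outer semicontinuous and locally bounded relative to $D$, and $D\subseteq\operatorname{dom}G$. A hybrid time domain is a set $E\subseteq\mathbb{R}_{\ge0}\times\mathbb{N}$ such that for each $(T,J)\in E$, $E\cap([0,T]\times\{0,\dots,J\})=\bigcup_{j=0}^{J}[t_j,t_{j+1}]\times\{j\}$ for some $0=t_0\le t_1\le\dots\le t_{J+1}$. A solution is a function $\phi$ on a hybrid time domain with $t\mapsto\phi(t,j)$ locally absolutely continuous on each $I^j=\{t:(t,j)\in\operatorname{dom}\phi\}$, $\phi(0,0)\in C\cup D$, such that for each $j$ with $I^j$ of nonempty interior, $\phi(t,j)\in C$ for all $t\in\operatorname{int}I^j$ and $\frac{d}{dt}\phi(t,j)\in F(\phi(t,j))$ for almost all $t\in I^j$, and whenever $(t,j),(t,j+1)\in\operatorname{dom}\phi$, $\phi(t,j)\in D$ and $\phi(t,j+1)\in G(\phi(t,j))$. A solution is $t$-complete if $\sup_{(t,j)\in\operatorname{dom}\phi}t=\infty$, and bounded if $\|\phi(t,j)\|\le R$ on its domain for some $R>0$. $T_C(x)$ is the (Bouligand) tangent cone: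 the set of $w$ for which there exist $\tau_i\downarrow0$ and $w_i\to w$ with $x+\tau_iw_i\in C$. $G$ proper means preimages of compact sets are compact. $\mathcal A=\{(x_1,x_2)\in(C\cup D\cup G(D))^2: x_1=x_2,\ \text{or } (x_2\in D \text{ and } x_1\in G(x_2)),\ \text{or } (x_1\in D\text{ and } x_2\in G(x_1))\}$ and $\rho_{\mathcal A}(x,y)=\inf_{(u,v)\in\mathcal A}\|(x-u,y-v)\|$, where $(a,b)$ denotes the stacked vector. *)

theory Defs
  imports "HOL-Analysis.Analysis"
begin

text \<open>Set-valued maps are functions \<open>'a \<Rightarrow> 'a set\<close>; vectors live in an arbitrary
  Euclidean space \<open>'a\<close> (i.e. \<open>\<real>^n\<close>).\<close>

definition osc_rel :: "('a::real_normed_vector \<Rightarrow> 'b::real_normed_vector set) \<Rightarrow> 'a set \<Rightarrow> bool" where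
  "osc_rel F S \<longleftrightarrow> (\<forall>x\<in>S. \<forall>xs ys y. (\<forall>i. xs i \<in> S \<and> ys i \<in> F (xs i)) \<and>
       xs \<longlonglongrightarrow> x \<and> ys \<longlonglongrightarrow> y \<longrightarrow> y \<in> F x)"

definition locally_bounded_rel :: "('a::real_normed_vector \<Rightarrow> 'b::real_normed_vector set) \<Rightarrow> 'a set \<Rightarrow> bool" where
  "locally_bounded_rel F S \<longleftrightarrow> (\<forall>x\<in>S. \<exists>e>0. bounded (\<Union>y\<in>S \<inter> ball x e. F y))"

definition hybrid_basic_conditions ::
  "'a::euclidean_space set \<Rightarrow> ('a \<Rightarrow> 'a set) \<Rightarrow> 'a set \<Rightarrow> ('a \<Rightarrow> 'a set) \<Rightarrow> bool" where
  "hybrid_basic_conditions C F D G \<longleftrightarrow>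
     closed C \<and> closed D \<and>
     osc_rel F C \<and> locally_bounded_rel F C \<and> (\<forall>x\<in>C. F x \<noteq> {} \<and> convex (F x)) \<and>
     osc_rel G D \<and> locally_bounded_rel G D \<and> (\<forall>x\<in>D. G x \<noteq> {})"

definition hybrid_time_domain :: "(real \<times> nat) set \<Rightarrow> bool" where
  "hybrid_time_domain E \<longleftrightarrow> E \<subseteq> {0..} \<times> UNIV \<and>
     (\<forall>(T,J)\<in>E. \<exists>tt :: nat \<Rightarrow> real. tt 0 = 0 \<and> (\<forall>j\<le>J. tt j \<le> tt (Suc j)) \<and>
        E \<inter> ({0..T} \<times> {0..J}) = (\<Union>j\<in>{0..J}. {tt j..tt (Suc j)} \<times> {j}))"

definition abs_continuous_on_interval :: "real \<Rightarrow> real \<Rightarrow> (real \<Rightarrow> 'a::real_normed_vector) \<Rightarrow> bool" where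
  "abs_continuous_on_interval a b f \<longleftrightarrow>
     (\<forall>e>0. \<exists>d>0. \<forall>(n::nat) (l::nat \<Rightarrow> real) (r::nat \<Rightarrow> real).
        (\<forall>k<n. a \<le> l k \<and> l k \<le> r k \<and> r k \<le> b) \<and>
        (\<forall>k<n. \<forall>k'<n. k \<noteq> k' \<longrightarrow> r k \<le> l k' \<or> r k' \<le> l k) \<and>
        (\<Sum>k<n. r k - l k) < d \<longrightarrow> (\<Sum>k<n. norm (f (r k) - f (l k))) < e)"

definition locally_abs_continuous_on :: "real set \<Rightarrow> (real \<Rightarrow> 'a::real_normed_vector) \<Rightarrow> bool" where
  "locally_abs_continuous_on I f \<longleftrightarrow> (\<forall>a b. {a..b} \<subseteq> I \<longrightarrow> abs_continuous_on_interval a b f)"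

definition Ij :: "(real \<times> nat) set \<Rightarrow> nat \<Rightarrow> real set" where
  "Ij E j = {t. (t, j) \<in> E}"

text \<open>A solution is a pair (domain \<open>E\<close>, function \<open>\<phi>\<close>); values of \<open>\<phi>\<close> off \<open>E\<close> are irrelevant.\<close>
definition is_solution ::
  "'a::euclidean_space set \<Rightarrow> ('a \<Rightarrow> 'a set) \<Rightarrow> 'a set \<Rightarrow> ('a \<Rightarrow> 'a set) \<Rightarrow>
   (real \<times> nat) set \<Rightarrow> (real \<times> nat \<Rightarrow> 'a) \<Rightarrow> bool" where
  "is_solution C F D G E \<phi> \<longleftrightarrow>
     hybrid_time_domain E \<and> (0, 0) \<in> E \<and> \<phi> (0, 0) \<in> C \<union> D \<and>
     (\<forall>j. locally_abs_continuous_on (Ij E j) (\<lambda>t. \<phi> (t, j))) \<and>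
     (\<forall>j. interior (Ij E j) \<noteq> {} \<longrightarrow>
        (\<forall>t\<in>interior (Ij E j). \<phi> (t, j) \<in> C) \<and>
        (\<exists>N. negligible N \<and> (\<forall>t\<in>Ij E j - N. \<exists>v.
            ((\<lambda>s. \<phi> (s, j)) has_vector_derivative v) (at t within Ij E j) \<and> v \<in> F (\<phi> (t, j))))) \<and>
     (\<forall>t j. (t, j) \<in> E \<and> (t, Suc j) \<in> E \<longrightarrow> \<phi> (t, j) \<in> D \<and> \<phi> (t, Suc j) \<in> G (\<phi> (t, j)))"

definition t_complete :: "(real \<times> nat) set \<Rightarrow> bool" where
  "t_complete E \<longleftrightarrow> (\<forall>T. \<exists>(t, j)\<in>E. t > T)"

definition bounded_solution :: "(real \<times> nat) set \<Rightarrow> (real \<times> nat \<Rightarrow> 'a::real_normed_vector) \<Rightarrow> bool" where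
  "bounded_solution E \<phi> \<longleftrightarrow> (\<exists>R>0. \<forall>p\<in>E. norm (\<phi> p) \<le> R)"

definition tangent_cone :: "'a::real_normed_vector set \<Rightarrow> 'a \<Rightarrow> 'a set" where
  "tangent_cone C x = {w. \<exists>\<tau> ws. (\<forall>i. \<tau> i > 0 \<and> x + \<tau> i *\<^sub>R ws i \<in> C) \<and>
       decseq \<tau> \<and> \<tau> \<longlonglongrightarrow> 0 \<and> ws \<longlonglongrightarrow> w}"

definition single_valued_on :: "('a \<Rightarrow> 'b set) \<Rightarrow> 'a set \<Rightarrow> bool" where
  "single_valued_on G D \<longleftrightarrow> (\<forall>x\<in>D. \<exists>y. G x = {y})"

definition proper_map :: "('a::topological_space \<Rightarrow> 'b::topological_space set) \<Rightarrow> bool" where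
  "proper_map G \<longleftrightarrow> (\<forall>K. compact K \<longrightarrow> compact {x. G x \<inter> K \<noteq> {}})"

definition set_image :: "('a \<Rightarrow> 'b set) \<Rightarrow> 'a set \<Rightarrow> 'b set" where
  "set_image G D = (\<Union>x\<in>D. G x)"

definition setA :: "'a set \<Rightarrow> 'a set \<Rightarrow> ('a \<Rightarrow> 'a set) \<Rightarrow> ('a \<times> 'a) set" where
  "setA C D G = {(x1, x2). x1 \<in> C \<union> D \<union> set_image G D \<and> x2 \<in> C \<union> D \<union> set_image G D \<and>
      (x1 = x2 \<or> (x2 \<in> D \<and> x1 \<in> G x2) \<or> (x1 \<in> D \<and> x2 \<in> G x1))}"

text \<open>Distance to \<open>\<A>\<close>; the norm on \<open>'a \<times> 'a\<close> is the Euclidean norm of the stacked vector.\<close>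
definition rhoA :: "'a::euclidean_space set \<Rightarrow> 'a set \<Rightarrow> ('a \<Rightarrow> 'a set) \<Rightarrow> 'a \<Rightarrow> 'a \<Rightarrow> real" where
  "rhoA C D G x y = (INF p\<in>setA C D G. norm ((x, y) - p))"

end

theory Submission
  imports Defs
begin


lemma acE:
  assumes "abs_continuous_on_interval a b f" "e > 0"
  obtains d where "d > 0" "\<And>(n::nat) (l::nat\<Rightarrow>real) r. (\<forall>k<n. a \<le> l k \<and> l k \<le> r k \<and> r k \<le> b) \<Longrightarrow>
        (\<forall>k<n. \<forall>k'<n. k \<noteq> k' \<longrightarrow> r k \<le> l k' \<or> r k' \<le> l k) \<Longrightarrow>
        (\<Sum>k<n. r k - l k) < d \<Longrightarrow> (\<Sum>k<n. norm (f (r k) - f (l k))) < e"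
proof -
  have X: "\<exists>d>0. \<forall>(n::nat) (l::nat \<Rightarrow> real) (r::nat \<Rightarrow> real).
        (\<forall>k<n. a \<le> l k \<and> l k \<le> r k \<and> r k \<le> b) \<and>
        (\<forall>k<n. \<forall>k'<n. k \<noteq> k' \<longrightarrow> r k \<le> l k' \<or> r k' \<le> l k) \<and>
        (\<Sum>k<n. r k - l k) < d \<longrightarrow> (\<Sum>k<n. norm (f (r k) - f (l k))) < e"
    using assms(1)[unfolded abs_continuous_on_interval_def, rule_format, OF assms(2)] .
  from X obtain d where "d > 0 \<and> (\<forall>(n::nat) (l::nat \<Rightarrow> real) (r::nat \<Rightarrow> real).
        (\<forall>k<n. a \<le> l k \<and> l k \<le> r k \<and> r k \<le> b) \<and>
        (\<forall>k<n. \<forall>k'<n. k \<noteq> k' \<longrightarrow> r k \<le> l k' \<or> r k' \<le> l k) \<and>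
        (\<Sum>k<n. r k - l k) < d \<longrightarrow> (\<Sum>k<n. norm (f (r k) - f (l k))) < e)" by (rule exE)
  note * = this
  show ?thesis
  proof (rule that)
    show "d > 0" using * by simp
    fix n :: nat and l r :: "nat \<Rightarrow> real"
    assume "\<forall>k<n. a \<le> l k \<and> l k \<le> r k \<and> r k \<le> b"
      "\<forall>k<n. \<forall>k'<n. k \<noteq> k' \<longrightarrow> r k \<le> l k' \<or> r k' \<le> l k" "(\<Sum>k<n. r k - l k) < d"
    then show "(\<Sum>k<n. norm (f (r k) - f (l k))) < e"
      using conjunct2[OF *, rule_format, of n l r] by blast
  qed
qed

lemma ac_cont:
  assumes "abs_continuous_on_interval a b f"
  shows "continuous_on {a..b} f"
  unfolding continuous_on_iff
proof (intro ballI allI impI)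
  fix x e :: real assume x: "x \<in> {a..b}" and e: "e > 0"
  obtain d where d: "d > 0" and H: "\<And>(n::nat) (l::nat\<Rightarrow>real) r. (\<forall>k<n. a \<le> l k \<and> l k \<le> r k \<and> r k \<le> b) \<Longrightarrow>
        (\<forall>k<n. \<forall>k'<n. k \<noteq> k' \<longrightarrow> r k \<le> l k' \<or> r k' \<le> l k) \<Longrightarrow>
        (\<Sum>k<n. r k - l k) < d \<Longrightarrow> (\<Sum>k<n. norm (f (r k) - f (l k))) < e"
    using acE[OF assms e] by blast
  show "\<exists>d>0. \<forall>x'\<in>{a..b}. dist x' x < d \<longrightarrow> dist (f x') (f x) < e"
  proof (intro exI[of _ d] conjI ballI impI d)
    fix y assume y: "y \<in> {a..b}" and dy: "dist y x < d"
    have "(\<Sum>k<Suc 0. norm (f ((\<lambda>_. max x y) k) - f ((\<lambda>_. min x y) k))) < e"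
      apply (rule H)
      using x y dy by (auto simp add: dist_real_def)
    then have "norm (f (max x y) - f (min x y)) < e" by simp
    then show "dist (f y) (f x) < e"
      by (cases "x \<le> y") (simp_all add: dist_norm norm_minus_commute max_def min_def)
  qed
qed
lemma ac_combine:
  fixes f :: "real \<Rightarrow> 'a::real_normed_vector" and g :: "real \<Rightarrow> 'b::real_normed_vector"
  assumes ac: "abs_continuous_on_interval a b f" and A: "A \<ge> 0" and B: "B \<ge> 0"
    and le: "\<And>l r. a \<le> l \<Longrightarrow> l \<le> r \<Longrightarrow> r \<le> b \<Longrightarrow> norm (g r - g l) \<le> A * norm (f r - f l) + B * (r - l)"
  shows "abs_continuous_on_interval a b g"
  unfolding abs_continuous_on_interval_def
proof (intro allI impI)
  fix e :: real assume e: "e > 0"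
  have e1: "e / (2 * (A + 1)) > 0" using e A by simp
  obtain d1 where d1: "d1 > 0" and H: "\<And>(n::nat) (l::nat\<Rightarrow>real) r. (\<forall>k<n. a \<le> l k \<and> l k \<le> r k \<and> r k \<le> b) \<Longrightarrow>
        (\<forall>k<n. \<forall>k'<n. k \<noteq> k' \<longrightarrow> r k \<le> l k' \<or> r k' \<le> l k) \<Longrightarrow>
        (\<Sum>k<n. r k - l k) < d1 \<Longrightarrow> (\<Sum>k<n. norm (f (r k) - f (l k))) < e / (2 * (A + 1))"
    using acE[OF ac e1] by blast
  define d where "d = min d1 (e / (2 * (B + 1)))"
  have d: "d > 0" using d1 e B by (simp add: d_def)
  show "\<exists>d>0. \<forall>(n::nat) (l::nat\<Rightarrow>real) r. (\<forall>k<n. a \<le> l k \<and> l k \<le> r k \<and> r k \<le> b) \<and>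
        (\<forall>k<n. \<forall>k'<n. k \<noteq> k' \<longrightarrow> r k \<le> l k' \<or> r k' \<le> l k) \<and>
        (\<Sum>k<n. r k - l k) < d \<longrightarrow> (\<Sum>k<n. norm (g (r k) - g (l k))) < e"
  proof (intro exI[of _ d] conjI allI impI d)
    fix n :: nat and l r :: "nat \<Rightarrow> real"
    assume P: "(\<forall>k<n. a \<le> l k \<and> l k \<le> r k \<and> r k \<le> b) \<and>
        (\<forall>k<n. \<forall>k'<n. k \<noteq> k' \<longrightarrow> r k \<le> l k' \<or> r k' \<le> l k) \<and>
        (\<Sum>k<n. r k - l k) < d"
    have S1: "(\<Sum>k<n. norm (f (r k) - f (l k))) < e / (2 * (A + 1))"
      using H P d_def by auto
    have S2: "(\<Sum>k<n. r k - l k) < e / (2 * (B + 1))" using P d_def by auto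
    have "(\<Sum>i<n. norm (g (r i) - g (l i))) \<le> (\<Sum>i<n. A * norm (f (r i) - f (l i)) + B * (r i - l i))"
      by (rule sum_mono) (use P le in auto)
    also have "\<dots> = A * (\<Sum>i<n. norm (f (r i) - f (l i))) + B * (\<Sum>i<n. r i - l i)"
      by (simp add: sum.distrib sum_distrib_left)
    also have "\<dots> < e"
    proof -
      have "A * (\<Sum>i<n. norm (f (r i) - f (l i))) \<le> A * (e / (2 * (A + 1)))"
        using S1 A by (intro mult_left_mono) auto
      also have "\<dots> < e / 2" using A e by (simp add: field_simps)
      finally have 1: "A * (\<Sum>i<n. norm (f (r i) - f (l i))) < e / 2" .
      have "B * (\<Sum>i<n. r i - l i) \<le> B * (e / (2 * (B + 1)))"
        using S2 B by (intro mult_left_mono) auto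
      also have "\<dots> < e / 2" using B e by (simp add: field_simps)
      finally have 2: "B * (\<Sum>i<n. r i - l i) < e / 2" .
      show ?thesis using 1 2 by simp
    qed
    finally show "(\<Sum>i<n. norm (g (r i) - g (l i))) < e" .
  qed
qed

lemma img_interval_meas:
  fixes k :: "real \<Rightarrow> real"
  assumes k: "continuous_on {c..d} k" and cd: "c \<le> d"
  shows "\<exists>l r. c \<le> l \<and> l \<le> r \<and> r \<le> d \<and> measure lebesgue (k ` {c..d}) \<le> \<bar>k r - k l\<bar>"
proof -
  have cpt: "compact (k ` {c..d})" using k by (intro compact_continuous_image) auto
  obtain p where p: "p \<in> {c..d}" "\<And>y. y \<in> {c..d} \<Longrightarrow> k y \<le> k p"
    using continuous_attains_sup[of "{c..d}" k] k cd by auto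
  obtain q where q: "q \<in> {c..d}" "\<And>y. y \<in> {c..d} \<Longrightarrow> k q \<le> k y"
    using continuous_attains_inf[of "{c..d}" k] k cd by auto
  have sub: "k ` {c..d} \<subseteq> {k q..k p}" using p q by auto
  have "measure lebesgue (k ` {c..d}) \<le> measure lebesgue {k q..k p}"
    by (rule measure_mono_fmeasurable[OF sub]) (auto intro: lmeasurable_compact cpt fmeasurableD)
  also have "\<dots> = k p - k q" using p(2)[OF q(1)] by simp
  finally have m: "measure lebesgue (k ` {c..d}) \<le> \<bar>k p - k q\<bar>" by simp
  show ?thesis
  proof (cases "q \<le> p")
    case True then show ?thesis using m p q by (intro exI[of _ q] exI[of _ p]) auto
  next
    case False then show ?thesis using m p q by (intro exI[of _ p] exI[of _ q]) (auto simp: abs_minus_commute)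
  qed
qed

lemma interior_disjoint_intervals:
  fixes c d c' d' :: real
  assumes "c < d" "c' < d'" "{c<..<d} \<inter> {c'<..<d'} = {}"
  shows "d \<le> c' \<or> d' \<le> c"
proof (rule ccontr)
  assume "\<not> (d \<le> c' \<or> d' \<le> c)"
  then have "(max c c' + min d d') / 2 \<in> {c<..<d} \<inter> {c'<..<d'}" using assms by (auto simp: max_def min_def split: if_splits)
  then show False using assms by blast
qed

lemma lusin:
  fixes k :: "real \<Rightarrow> real"
  assumes ac: "abs_continuous_on_interval a b k" and N: "negligible N"
  shows "negligible (k ` (N \<inter> {a..b}))"
proof (cases "a < b")
  case False
  have "x = a" if "x \<in> {a..b}" for x using False that by auto
  then have "k ` (N \<inter> {a..b}) \<subseteq> {k a}" by (metis IntD2 image_subset_iff singletonI)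
  then show ?thesis using negligible_subset negligible_sing by blast
next
  case ab: True
  define S where "S = N \<inter> {a..b}"
  have negS: "negligible S" unfolding S_def using N negligible_subset by blast
  then have Sm: "S \<in> lmeasurable" and S0: "measure lebesgue S = 0"
    using negligible_iff_measure by blast+
  have Ssub: "S \<subseteq> cbox a b" by (auto simp: S_def)
  have kc: "continuous_on {a..b} k" using ac_cont[OF ac] .
  show ?thesis unfolding S_def[symmetric] negligible_outer_le
  proof (intro allI impI)
    fix e :: real assume e: "e > 0"
    have e2: "e / 2 > 0" using e by simp
    obtain \<delta> where \<delta>: "\<delta> > 0" and H: "\<And>(n::nat) (l::nat\<Rightarrow>real) r. (\<forall>k<n. a \<le> l k \<and> l k \<le> r k \<and> r k \<le> b) \<Longrightarrow>
        (\<forall>k<n. \<forall>k'<n. k \<noteq> k' \<longrightarrow> r k \<le> l k' \<or> r k' \<le> l k) \<Longrightarrow>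
        (\<Sum>k<n. r k - l k) < \<delta> \<Longrightarrow> (\<Sum>i<n. norm (k (r i) - k (l i))) < e / 2"
      using acE[OF ac e2] by blast
    have \<delta>2: "\<delta> / 2 > 0" using \<delta> by simp
    obtain D where Dc: "countable D"
        and DK: "\<And>K. K \<in> D \<Longrightarrow> K \<subseteq> cbox a b \<and> K \<noteq> {} \<and> (\<exists>c d. K = cbox c d)"
        and Dp: "pairwise (\<lambda>A B. interior A \<inter> interior B = {}) D"
        and Dq: "\<And>u v. cbox u v \<in> D \<Longrightarrow> \<exists>n. \<forall>i \<in> Basis. v \<bullet> i - u \<bullet> i = (b \<bullet> i - a \<bullet> i)/2^n"
        and Di: "\<And>K. \<lbrakk>K \<in> D; box a b \<noteq> {}\<rbrakk> \<Longrightarrow> interior K \<noteq> {}"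
        and DS: "S \<subseteq> \<Union>D" and Dm: "\<Union>D \<in> lmeasurable" and Dle: "measure lebesgue (\<Union>D) \<le> measure lebesgue S + \<delta> / 2"
      by (rule measurable_outer_intervals_bounded[OF Sm Ssub \<delta>2]) blast
    have boxne: "box a b \<noteq> {}" using ab by simp
    have Kint: "\<exists>c d. K = {c..d} \<and> c < d \<and> a \<le> c \<and> d \<le> b" if KD0: "K \<in> D" for K
    proof -
      obtain c d where K: "K = cbox c d" using DK[OF KD0] by blast
      have "interior K \<noteq> {}" using Di[OF KD0 boxne] .
      then have cd: "c < d" using K by auto
      have "K \<subseteq> {a..b}" using DK[OF KD0] by auto
      then show ?thesis using K cd by (intro exI[of _ c] exI[of _ d]) auto
    qed
    define cL where "cL K = (SOME c. \<exists>d. K = {c..d} \<and> c < d \<and> a \<le> c \<and> d \<le> b)" for K :: "real set"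
    define cR where "cR K = (SOME d. K = {cL K..d} \<and> cL K < d \<and> a \<le> cL K \<and> d \<le> b)" for K :: "real set"
    have cLR: "K = {cL K..cR K} \<and> cL K < cR K \<and> a \<le> cL K \<and> cR K \<le> b" if "K \<in> D" for K
    proof -
      have "\<exists>d. K = {cL K..d} \<and> cL K < d \<and> a \<le> cL K \<and> d \<le> b"
        unfolding cL_def using Kint[OF that] by (rule someI_ex)
      then show ?thesis unfolding cR_def by (rule someI_ex)
    qed
    have cLR2: "a \<le> cL K \<and> cL K < cR K \<and> cR K \<le> b" if "K \<in> D" for K using cLR[OF that] by blast
    have cLR3: "{cL K..cR K} \<subseteq> {a..b}" if "K \<in> D" for K using cLR2[OF that] by auto
    have LRex: "\<exists>l r. cL K \<le> l \<and> l \<le> r \<and> r \<le> cR K \<and> measure lebesgue (k ` {cL K..cR K}) \<le> \<bar>k r - k l\<bar>"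
      if "K \<in> D" for K
    proof (rule img_interval_meas)
      show "continuous_on {cL K..cR K} k" using cLR3[OF that] by (intro continuous_on_subset[OF kc])
      show "cL K \<le> cR K" using cLR2[OF that] by simp
    qed
    define L where "L K = (SOME l. \<exists>r. cL K \<le> l \<and> l \<le> r \<and> r \<le> cR K \<and> measure lebesgue (k ` {cL K..cR K}) \<le> \<bar>k r - k l\<bar>)" for K
    define R where "R K = (SOME r. cL K \<le> L K \<and> L K \<le> r \<and> r \<le> cR K \<and> measure lebesgue (k ` {cL K..cR K}) \<le> \<bar>k r - k (L K)\<bar>)" for K
    have LR: "cL K \<le> L K \<and> L K \<le> R K \<and> R K \<le> cR K \<and> measure lebesgue (k ` K) \<le> \<bar>k (R K) - k (L K)\<bar>" if "K \<in> D" for K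
    proof -
      have "\<exists>r. cL K \<le> L K \<and> L K \<le> r \<and> r \<le> cR K \<and> measure lebesgue (k ` {cL K..cR K}) \<le> \<bar>k r - k (L K)\<bar>"
        unfolding L_def using LRex[OF that] by (rule someI_ex)
      then have "cL K \<le> L K \<and> L K \<le> R K \<and> R K \<le> cR K \<and> measure lebesgue (k ` {cL K..cR K}) \<le> \<bar>k (R K) - k (L K)\<bar>"
        unfolding R_def by (rule someI_ex)
      then show ?thesis using cLR[OF that] by metis
    qed
    have sep: "cR K \<le> cL K' \<or> cR K' \<le> cL K" if "K \<in> D" "K' \<in> D" "K \<noteq> K'" for K K'
    proof (rule interior_disjoint_intervals)
      show "cL K < cR K" "cL K' < cR K'" using cLR that by auto
      have "interior K \<inter> interior K' = {}" using Dp that unfolding pairwise_def by blast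
      then show "{cL K<..<cR K} \<inter> {cL K'<..<cR K'} = {}" using cLR[OF that(1)] cLR[OF that(2)] by (metis interior_atLeastAtMost_real)
    qed
    show "\<exists>T. k ` S \<subseteq> T \<and> T \<in> lmeasurable \<and> measure lebesgue T \<le> e"
    proof (cases "D = {}")
      case True
      then have "k ` S = {}" using DS by auto
      then show ?thesis using e by (intro exI[of _ "{}"]) auto
    next
      case Dne: False
      define Si where "Si i = k ` (from_nat_into D i)" for i
      have KD: "from_nat_into D i \<in> D" for i using from_nat_into[OF Dne] .
      have cptK: "compact (k ` K)" if "K \<in> D" for K
      proof -
        have "compact (k ` {cL K..cR K})" using cLR3[OF that] by (intro compact_continuous_image continuous_on_subset[OF kc]) auto
        then show ?thesis using cLR[OF that] by metis
      qed
      have Sim: "Si i \<in> fmeasurable lebesgue" for i unfolding Si_def using cptK[OF KD] lmeasurable_compact by blast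
      have bound: "measure lebesgue (\<Union>i\<le>n. Si i) \<le> e / 2" for n
      proof -
        define F where "F = from_nat_into D ` {..n}"
        have Ffin: "finite F" and FD: "F \<subseteq> D" unfolding F_def using KD by auto
        have U: "(\<Union>i\<le>n. Si i) = (\<Union>K\<in>F. k ` K)" unfolding F_def Si_def by auto
        have "measure lebesgue (\<Union>K\<in>F. k ` K) \<le> (\<Sum>K\<in>F. measure lebesgue (k ` K))"
          by (rule measure_UNION_le[OF Ffin]) (use FD cptK lmeasurable_compact fmeasurableD in blast)
        also have "\<dots> \<le> (\<Sum>K\<in>F. \<bar>k (R K) - k (L K)\<bar>)"
          by (rule sum_mono) (use FD LR in blast)
        also have "\<dots> \<le> e / 2"
        proof -
          obtain h where h: "bij_betw h {0..<card F} F" using ex_bij_betw_nat_finite[OF Ffin] by blast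
          have hF: "h i \<in> F" if "i < card F" for i using h that unfolding bij_betw_def by auto
          have hinj: "h i \<noteq> h i'" if "i < card F" "i' < card F" "i \<noteq> i'" for i i'
            using h that unfolding bij_betw_def inj_on_def by auto
          have sumeq: "(\<Sum>i<card F. g (h i)) = (\<Sum>K\<in>F. g K)" for g :: "real set \<Rightarrow> real"
            using sum.reindex_bij_betw[OF h, of g] by (simp add: atLeast0LessThan)
          have FKm: "K \<in> lmeasurable" if "K \<in> F" for K using cLR[of K] FD that by (metis lmeasurable_cbox cbox_interval subsetD)
          have UFm: "\<Union>F \<in> sets lebesgue" by (rule sets.finite_Union[OF Ffin]) (use FKm fmeasurableD in auto)
          have meqF: "measure lebesgue (\<Union>F) = (\<Sum>K\<in>F. measure lebesgue K)"
          proof (rule measure_negligible_finite_Union[OF Ffin])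
            show "K \<in> lmeasurable" if "K \<in> F" for K using cLR[of K] FD that by (metis lmeasurable_cbox cbox_interval subsetD)
            show "pairwise (\<lambda>S T. negligible (S \<inter> T)) F"
              unfolding pairwise_def
            proof (intro ballI impI)
              fix K K' assume KK: "K \<in> F" "K' \<in> F" "K \<noteq> K'"
              then have KK': "K \<in> D" "K' \<in> D" using FD by auto
              have "{cL K..cR K} \<inter> {cL K'..cR K'} \<subseteq> {cR K} \<or> {cL K..cR K} \<inter> {cL K'..cR K'} \<subseteq> {cR K'}"
                using sep[OF KK' KK(3)] cLR2[OF KK'(1)] cLR2[OF KK'(2)] by auto
              then have "negligible ({cL K..cR K} \<inter> {cL K'..cR K'})" using negligible_subset negligible_sing by metis
              then show "negligible (K \<inter> K')" using cLR[OF KK'(1)] cLR[OF KK'(2)] by metis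
            qed
          qed
          have "(\<Sum>K\<in>F. R K - L K) \<le> (\<Sum>K\<in>F. measure lebesgue K)"
          proof (rule sum_mono)
            fix K assume "K \<in> F"
            then have KD': "K \<in> D" using FD by auto
            have m: "measure lebesgue {cL K..cR K} = cR K - cL K" using cLR2[OF KD'] by simp
            have "R K - L K \<le> cR K - cL K" using LR[OF KD'] by linarith
            then show "R K - L K \<le> measure lebesgue K" using m cLR[OF KD'] by metis
          qed
          also have "\<dots> = measure lebesgue (\<Union>F)" using meqF by simp
          also have "\<dots> \<le> measure lebesgue (\<Union>D)"
            by (rule measure_mono_fmeasurable) (use FD Dm UFm in auto)
          also have "\<dots> < \<delta>" using Dle S0 \<delta> by simp
          finally have sl: "(\<Sum>K\<in>F. R K - L K) < \<delta>" .
          have "(\<Sum>i<card F. norm (k ((R \<circ> h) i) - k ((L \<circ> h) i))) < e / 2"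
          proof (rule H)
            show "\<forall>i<card F. a \<le> (L \<circ> h) i \<and> (L \<circ> h) i \<le> (R \<circ> h) i \<and> (R \<circ> h) i \<le> b"
              using hF FD LR cLR by (force)
            show "\<forall>i<card F. \<forall>i'<card F. i \<noteq> i' \<longrightarrow> (R \<circ> h) i \<le> (L \<circ> h) i' \<or> (R \<circ> h) i' \<le> (L \<circ> h) i"
            proof (intro allI impI)
              fix i i' assume ii: "i < card F" "i' < card F" "i \<noteq> i'"
              have D2: "h i \<in> D" "h i' \<in> D" using hF ii FD by auto
              show "(R \<circ> h) i \<le> (L \<circ> h) i' \<or> (R \<circ> h) i' \<le> (L \<circ> h) i"
                using sep[OF D2 hinj[OF ii]] LR[OF D2(1)] LR[OF D2(2)] by auto
            qed
            show "(\<Sum>i<card F. (R \<circ> h) i - (L \<circ> h) i) < \<delta>"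
              using sumeq[of "\<lambda>K. R K - L K"] sl by simp
          qed
          then show ?thesis using sumeq[of "\<lambda>K. \<bar>k (R K) - k (L K)\<bar>"] by simp
        qed
        finally show ?thesis using U by simp
      qed
      have Tm: "(\<Union>i. Si i) \<in> fmeasurable lebesgue" and Tle: "measure lebesgue (\<Union>i. Si i) \<le> e / 2"
        using fmeasurable_countable_Union[OF Sim bound] measure_countable_Union_le[OF Sim bound] by auto
      have "k ` S \<subseteq> (\<Union>i. Si i)"
      proof
        fix y assume "y \<in> k ` S"
        then obtain x where x: "x \<in> S" "y = k x" by auto
        then obtain K where "K \<in> D" "x \<in> K" using DS by auto
        then obtain i where "K = from_nat_into D i" using range_from_nat_into[OF Dne Dc] by (metis rangeE)
        then show "y \<in> (\<Union>i. Si i)" using x \<open>x \<in> K\<close> unfolding Si_def by auto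
      qed
      then show ?thesis using Tm Tle e by (intro exI[of _ "\<Union>i. Si i"]) auto
    qed
  qed
qed

lemma mono_core:
  fixes k :: "real \<Rightarrow> real"
  assumes ab: "a \<le> b" and ac: "abs_continuous_on_interval a b k" and N: "negligible N"
    and der: "\<And>t. t \<in> {a..b} - N \<Longrightarrow> \<exists>d. (k has_real_derivative d) (at t within {a..b}) \<and> d < 0"
  shows "k b \<le> k a"
proof (rule ccontr)
  assume "\<not> k b \<le> k a"
  then have lt: "k a < k b" by simp
  have kc: "continuous_on {a..b} k" using ac_cont[OF ac] .
  have negI: "negligible (k ` (N \<inter> {a..b}))" using lusin[OF ac N] .
  have "\<not> {k a<..<k b} \<subseteq> k ` (N \<inter> {a..b})"
  proof
    assume "{k a<..<k b} \<subseteq> k ` (N \<inter> {a..b})"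
    then have "negligible (box (k a) (k b))" using negI negligible_subset by (metis box_real(1))
    moreover have "box (k a) (k b) \<noteq> {}" using lt by simp
    ultimately show False using negligible_interval(2) by blast
  qed
  then obtain y where y0: "y \<in> {k a<..<k b}" "y \<notin> k ` (N \<inter> {a..b})" by blast
  then have y: "k a < y" "y < k b" "y \<notin> k ` (N \<inter> {a..b})" by auto
  define S where "S = {t \<in> {a..b}. k t = y}"
  have Scl: "closed S" unfolding S_def by (rule continuous_closed_preimage_constant[OF kc]) simp
  have Sne: "S \<noteq> {}" using IVT'[of k a y b, OF _ _ ab kc] y unfolding S_def by force
  have Sbdd: "bdd_above S" unfolding S_def by (auto intro: bdd_aboveI[of _ b])
  define c where "c = Sup S"
  have cS: "c \<in> S" unfolding c_def by (rule closed_contains_Sup[OF Sne Sbdd Scl])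
  have cge: "t \<le> c" if "t \<in> S" for t unfolding c_def using cSup_upper[OF that Sbdd] .
  have kcy: "k c = y" and cab: "c \<in> {a..b}" using cS unfolding S_def by auto
  have cb: "c < b" using kcy cab y by (metis atLeastAtMost_iff order_le_less less_irrefl)
  have pos: "k t > y" if "t \<in> {c<..b}" for t
  proof (rule ccontr)
    assume "\<not> k t > y"
    then have "k t \<le> y" by simp
    moreover have "continuous_on {t..b} k" using that cab by (intro continuous_on_subset[OF kc]) auto
    moreover have "t \<le> b" using that by auto
    ultimately obtain x where x: "x \<ge> t" "x \<le> b" "k x = y" using IVT'[of k t y b] y by auto
    then have "x \<in> S" using that cab unfolding S_def by auto
    then show False using cge x that by force
  qed
  have cN: "c \<notin> N" using y(3) kcy cab by auto
  obtain d where dd: "(k has_real_derivative d) (at c within {a..b})" and dneg: "d < 0"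
    using der[of c] cN cab by auto
  have lim: "((\<lambda>x. (k x - k c) / (x - c)) \<longlongrightarrow> d) (at c within {c..b})"
    using tendsto_within_subset[OF has_field_derivative_iff[THEN iffD1, OF dd]] cab by auto
  have ev: "eventually (\<lambda>x. 0 \<le> (k x - k c) / (x - c)) (at c within {c..b})"
    unfolding eventually_at_filter
  proof (rule always_eventually, intro allI impI)
    fix x assume "x \<noteq> c" "x \<in> {c..b}"
    then have "x \<in> {c<..b}" by auto
    then show "0 \<le> (k x - k c) / (x - c)" using pos[of x] kcy by auto
  qed
  have nb: "\<not> trivial_limit (at c within {c..b})" using at_within_Icc_at_right[OF cb] by simp
  have "0 \<le> d" using tendsto_lowerbound[OF lim ev nb] .
  then show False using dneg by simp
qed

lemma mv_inner:
  fixes f :: "real \<Rightarrow> 'a::real_inner"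
  assumes ab: "a \<le> b" and ac: "abs_continuous_on_interval a b f" and N: "negligible N"
    and der: "\<And>t. t \<in> {a..b} - N \<Longrightarrow> \<exists>v. (f has_vector_derivative v) (at t within {a..b}) \<and> inner e v \<le> c"
  shows "inner e (f b - f a) \<le> c * (b - a)"
proof -
  have main: "inner e (f b - f a) \<le> (c + \<epsilon>) * (b - a)" if \<epsilon>: "\<epsilon> > 0" for \<epsilon>
  proof -
    define k where "k t = inner e (f t) - (c + \<epsilon>) * t" for t
    have ack: "abs_continuous_on_interval a b k"
    proof (rule ac_combine[OF ac, of "norm e" "\<bar>c + \<epsilon>\<bar>"])
      fix l r assume lr: "a \<le> l" "l \<le> r" "r \<le> b"
      have "norm (k r - k l) = \<bar>inner e (f r - f l) - (c + \<epsilon>) * (r - l)\<bar>"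
        by (simp add: k_def inner_diff_right algebra_simps)
      also have "\<dots> \<le> \<bar>inner e (f r - f l)\<bar> + \<bar>(c + \<epsilon>) * (r - l)\<bar>" by (rule abs_triangle_ineq4)
      also have "\<dots> \<le> norm e * norm (f r - f l) + \<bar>c + \<epsilon>\<bar> * (r - l)"
        using Cauchy_Schwarz_ineq2[of e "f r - f l"] lr by (simp add: abs_mult)
      finally show "norm (k r - k l) \<le> norm e * norm (f r - f l) + \<bar>c + \<epsilon>\<bar> * (r - l)" .
    qed auto
    have "k b \<le> k a"
    proof (rule mono_core[OF ab ack N])
      fix t assume t: "t \<in> {a..b} - N"
      obtain v where v: "(f has_vector_derivative v) (at t within {a..b})" "inner e v \<le> c" using der[OF t] by blast
      have "((\<lambda>t. inner e (f t)) has_vector_derivative inner e v) (at t within {a..b})"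
        using bounded_linear.has_vector_derivative[OF bounded_linear_inner_right v(1)] .
      then have d1: "((\<lambda>t. inner e (f t)) has_real_derivative inner e v) (at t within {a..b})"
        using has_real_derivative_iff_has_vector_derivative by blast
      have "(k has_real_derivative (inner e v - (c + \<epsilon>))) (at t within {a..b})"
        unfolding k_def by (rule derivative_eq_intros d1 | simp)+
      then show "\<exists>d. (k has_real_derivative d) (at t within {a..b}) \<and> d < 0" using v(2) \<epsilon> by force
    qed
    then show ?thesis by (simp add: k_def inner_diff_right algebra_simps)
  qed
  show ?thesis
  proof (rule field_le_epsilon)
    fix \<epsilon> :: real assume \<epsilon>: "\<epsilon> > 0"
    have "inner e (f b - f a) \<le> (c + \<epsilon> / (b - a + 1)) * (b - a)" using main \<epsilon> ab by simp
    also have "\<dots> = c * (b - a) + \<epsilon> * ((b - a) / (b - a + 1))" using ab by (simp add: field_simps)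
    also have "\<dots> \<le> c * (b - a) + \<epsilon> * 1"
      using ab \<epsilon> by (intro add_left_mono mult_left_mono) auto
    finally show "inner e (f b - f a) \<le> c * (b - a) + \<epsilon>" by simp
  qed
qed

definition farc :: "'a::euclidean_space set \<Rightarrow> ('a \<Rightarrow> 'a set) \<Rightarrow> (real \<Rightarrow> 'a) \<Rightarrow> real \<Rightarrow> real \<Rightarrow> bool" where
  "farc C F f a b \<longleftrightarrow> a \<le> b \<and> abs_continuous_on_interval a b f \<and> (\<forall>t\<in>{a<..<b}. f t \<in> C) \<and>
     (\<exists>N. negligible N \<and> (\<forall>t\<in>{a..b} - N. \<exists>v. (f has_vector_derivative v) (at t within {a..b}) \<and> v \<in> F (f t)))"

lemma ac_sub:
  assumes ac: "abs_continuous_on_interval a b f" and "a \<le> a'" "b' \<le> b"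
  shows "abs_continuous_on_interval a' b' f"
  unfolding abs_continuous_on_interval_def
proof (intro allI impI)
  fix e :: real assume e: "e > 0"
  obtain d where d: "d > 0" and H: "\<And>(n::nat) (l::nat\<Rightarrow>real) r. (\<forall>k<n. a \<le> l k \<and> l k \<le> r k \<and> r k \<le> b) \<Longrightarrow>
        (\<forall>k<n. \<forall>k'<n. k \<noteq> k' \<longrightarrow> r k \<le> l k' \<or> r k' \<le> l k) \<Longrightarrow>
        (\<Sum>k<n. r k - l k) < d \<Longrightarrow> (\<Sum>k<n. norm (f (r k) - f (l k))) < e"
    using acE[OF ac e] by blast
  show "\<exists>d>0. \<forall>(n::nat) (l::nat\<Rightarrow>real) r. (\<forall>k<n. a' \<le> l k \<and> l k \<le> r k \<and> r k \<le> b') \<and>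
        (\<forall>k<n. \<forall>k'<n. k \<noteq> k' \<longrightarrow> r k \<le> l k' \<or> r k' \<le> l k) \<and>
        (\<Sum>k<n. r k - l k) < d \<longrightarrow> (\<Sum>k<n. norm (f (r k) - f (l k))) < e"
  proof (intro exI[of _ d] conjI allI impI d)
    fix n :: nat and l r :: "nat \<Rightarrow> real"
    assume P: "(\<forall>k<n. a' \<le> l k \<and> l k \<le> r k \<and> r k \<le> b') \<and>
        (\<forall>k<n. \<forall>k'<n. k \<noteq> k' \<longrightarrow> r k \<le> l k' \<or> r k' \<le> l k) \<and> (\<Sum>k<n. r k - l k) < d"
    show "(\<Sum>k<n. norm (f (r k) - f (l k))) < e"
    proof (rule H)
      show "\<forall>k<n. a \<le> l k \<and> l k \<le> r k \<and> r k \<le> b"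
      proof (intro allI impI)
        fix k assume "k < n" then show "a \<le> l k \<and> l k \<le> r k \<and> r k \<le> b" using P assms(2,3) by fastforce
      qed
    qed (use P in auto)
  qed
qed

lemma farc_cont: "farc C F f a b \<Longrightarrow> continuous_on {a..b} f"
  unfolding farc_def using ac_cont by blast

lemma farc_sub:
  assumes "farc C F f a b" "a \<le> a'" "a' \<le> b'" "b' \<le> b"
  shows "farc C F f a' b'"
proof -
  obtain N where N: "negligible N" and D: "\<And>t. t\<in>{a..b} - N \<Longrightarrow> \<exists>v. (f has_vector_derivative v) (at t within {a..b}) \<and> v \<in> F (f t)"
    using assms(1) unfolding farc_def by blast
  have "\<exists>v. (f has_vector_derivative v) (at t within {a'..b'}) \<and> v \<in> F (f t)" if tt: "t \<in> {a'..b'} - N" for t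
  proof -
    have "t \<in> {a..b} - N" using tt assms by auto
    then obtain v where "(f has_vector_derivative v) (at t within {a..b})" "v \<in> F (f t)" using D[of t] by blast
    then show ?thesis using has_vector_derivative_within_subset[of f v t "{a..b}" "{a'..b'}"] assms by auto
  qed
  then show ?thesis using assms N ac_sub[of a b f a' b'] unfolding farc_def by auto
qed

lemma farc_bound_inner:
  assumes A: "farc C F f a b" and B: "\<And>t y. t \<in> {a<..<b} \<Longrightarrow> y \<in> F (f t) \<Longrightarrow> inner e y \<le> c"
  shows "inner e (f b - f a) \<le> c * (b - a)"
proof -
  obtain N where N: "negligible N" and D: "\<And>t. t\<in>{a..b} - N \<Longrightarrow> \<exists>v. (f has_vector_derivative v) (at t within {a..b}) \<and> v \<in> F (f t)"
    using A unfolding farc_def by blast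
  show ?thesis
  proof (rule mv_inner[of a b f "N \<union> {a, b}"])
    show "a \<le> b" "abs_continuous_on_interval a b f" using A unfolding farc_def by auto
    show "negligible (N \<union> {a, b})" using N by auto
    fix t assume t: "t \<in> {a..b} - (N \<union> {a, b})"
    then obtain v where "(f has_vector_derivative v) (at t within {a..b})" "v \<in> F (f t)" using D[of t] by auto
    moreover have "t \<in> {a<..<b}" using t by auto
    ultimately show "\<exists>v. (f has_vector_derivative v) (at t within {a..b}) \<and> inner e v \<le> c" using B by blast
  qed
qed

lemma farc_bound_norm:
  assumes A: "farc C F f a b" and M: "M \<ge> 0" and B: "\<And>t y. t \<in> {a<..<b} \<Longrightarrow> y \<in> F (f t) \<Longrightarrow> norm y \<le> M"
  shows "norm (f b - f a) \<le> M * (b - a)"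
proof -
  define e where "e = f b - f a"
  have "inner e e \<le> (norm e * M) * (b - a)"
  proof (rule farc_bound_inner[OF A, unfolded e_def[symmetric]])
    fix t y assume "t \<in> {a<..<b}" "y \<in> F (f t)"
    then have "norm y \<le> M" using B by blast
    then show "inner e y \<le> norm e * M"
      using Cauchy_Schwarz_ineq2[of e y] by (meson abs_le_D1 mult_left_mono norm_ge_zero order_trans)
  qed
  then have "norm e * norm e \<le> norm e * (M * (b - a))" by (simp add: dot_square_norm power2_eq_square algebra_simps)
  moreover have "b - a \<ge> 0" using A unfolding farc_def by auto
  ultimately show ?thesis unfolding e_def[symmetric]
    by (metis M mult_le_cancel_left_pos mult_nonneg_nonneg norm_ge_zero order_le_less)
qed

lemma farc_rev:
  assumes A: "farc C F f a b"
  shows "farc C (\<lambda>x. uminus ` F x) (\<lambda>t. f (- t)) (- b) (- a)"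
proof -
  obtain N where N: "negligible N" and D: "\<And>t. t\<in>{a..b} - N \<Longrightarrow> \<exists>v. (f has_vector_derivative v) (at t within {a..b}) \<and> v \<in> F (f t)"
    using A unfolding farc_def by blast
  have ab: "a \<le> b" and ac: "abs_continuous_on_interval a b f" and inC: "\<And>t. t \<in> {a<..<b} \<Longrightarrow> f t \<in> C"
    using A unfolding farc_def by auto
  have ac': "abs_continuous_on_interval (- b) (- a) (\<lambda>t. f (- t))"
    unfolding abs_continuous_on_interval_def
  proof (intro allI impI)
    fix e :: real assume e: "e > 0"
    obtain d where d: "d > 0" and H: "\<And>(n::nat) (l::nat\<Rightarrow>real) r. (\<forall>k<n. a \<le> l k \<and> l k \<le> r k \<and> r k \<le> b) \<Longrightarrow>
          (\<forall>k<n. \<forall>k'<n. k \<noteq> k' \<longrightarrow> r k \<le> l k' \<or> r k' \<le> l k) \<Longrightarrow>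
          (\<Sum>k<n. r k - l k) < d \<Longrightarrow> (\<Sum>k<n. norm (f (r k) - f (l k))) < e"
      using acE[OF ac e] by blast
    show "\<exists>d>0. \<forall>(n::nat) (l::nat\<Rightarrow>real) r. (\<forall>k<n. - b \<le> l k \<and> l k \<le> r k \<and> r k \<le> - a) \<and>
          (\<forall>k<n. \<forall>k'<n. k \<noteq> k' \<longrightarrow> r k \<le> l k' \<or> r k' \<le> l k) \<and>
          (\<Sum>k<n. r k - l k) < d \<longrightarrow> (\<Sum>k<n. norm (f (- r k) - f (- l k))) < e"
    proof (intro exI[of _ d] conjI allI impI d)
      fix n :: nat and l r :: "nat \<Rightarrow> real"
      assume P: "(\<forall>k<n. - b \<le> l k \<and> l k \<le> r k \<and> r k \<le> - a) \<and>
          (\<forall>k<n. \<forall>k'<n. k \<noteq> k' \<longrightarrow> r k \<le> l k' \<or> r k' \<le> l k) \<and> (\<Sum>k<n. r k - l k) < d"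
      have "(\<Sum>k<n. norm (f ((\<lambda>i. - l i) k) - f ((\<lambda>i. - r i) k))) < e"
      proof (rule H)
        show "\<forall>k<n. a \<le> - r k \<and> - r k \<le> - l k \<and> - l k \<le> b" using P by force
        show "\<forall>k<n. \<forall>k'<n. k \<noteq> k' \<longrightarrow> - l k \<le> - r k' \<or> - l k' \<le> - r k" using P by force
        have "(\<Sum>k<n. - l k - - r k) = (\<Sum>k<n. r k - l k)" by (simp add: algebra_simps)
        then show "(\<Sum>k<n. - l k - - r k) < d" using P by simp
      qed
      then show "(\<Sum>k<n. norm (f (- r k) - f (- l k))) < e" by (simp add: norm_minus_commute)
    qed
  qed
  define N' where "N' = uminus ` N"
  have N': "negligible N'" unfolding N'_def
  proof (rule negligible_locally_Lipschitz_image[OF _ N])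
    fix x :: real assume "x \<in> N"
    show "\<exists>T B. open T \<and> x \<in> T \<and> (\<forall>y\<in>N \<inter> T. norm (- y - - x) \<le> B * norm (y - x))"
      by (rule exI[of _ UNIV], rule exI[of _ 1]) (simp add: abs_minus_commute)
  qed simp
  have "\<exists>v. ((\<lambda>t. f (- t)) has_vector_derivative v) (at t within {-b..-a}) \<and> v \<in> uminus ` F (f (- t))"
    if t: "t \<in> {-b..-a} - N'" for t
  proof -
    have "- t \<in> {a..b} - N" using t unfolding N'_def by (auto simp: image_iff)
    then obtain v where v: "(f has_vector_derivative v) (at (- t) within {a..b})" "v \<in> F (f (- t))" using D by blast
    have u: "(uminus has_vector_derivative (-1)) (at t within {-b..-a})"
      using has_vector_derivative_minus[OF has_vector_derivative_id[of "at t within {-b..-a}"]] by (simp add: fun_Compl_def)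
    have "((f \<circ> uminus) has_vector_derivative ((-1) *\<^sub>R v)) (at t within {-b..-a})"
      by (rule vector_diff_chain_within[OF u]) (use v(1) in simp)
    then show ?thesis using v(2) by (intro exI[of _ "- v"]) (auto simp: o_def)
  qed
  moreover have "\<forall>t\<in>{- b<..<- a}. f (- t) \<in> C" using inC by auto
  ultimately show ?thesis using ab ac' N' unfolding farc_def by auto
qed

lemma lb_bounded:
  fixes F :: "'a::euclidean_space \<Rightarrow> 'b::real_normed_vector set"
  assumes lb: "locally_bounded_rel F C" and C: "closed C"
  shows "\<exists>M>0. \<forall>z\<in>C. norm z \<le> R \<longrightarrow> (\<forall>y\<in>F z. norm y \<le> M)"
proof -
  have "\<forall>x\<in>C. \<exists>e. e > 0 \<and> bounded (\<Union>y\<in>C \<inter> ball x e. F y)" using lb unfolding locally_bounded_rel_def by blast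
  then obtain e where e: "\<And>x. x \<in> C \<Longrightarrow> e x > 0 \<and> bounded (\<Union>y\<in>C \<inter> ball x (e x). F y)" by metis
  define K where "K = C \<inter> cball 0 R"
  have Kc: "compact K" unfolding K_def using C by (simp add: closed_Int_compact)
  have "K \<subseteq> (\<Union>x\<in>K. ball x (e x))" using e unfolding K_def by force
  then obtain T where T: "T \<subseteq> K" "finite T" "K \<subseteq> (\<Union>x\<in>T. ball x (e x))"
    using compactE_image[OF Kc, of K "\<lambda>x. ball x (e x)"] by blast
  have "bounded (\<Union>x\<in>T. \<Union>y\<in>C \<inter> ball x (e x). F y)"
    using T e unfolding K_def by (intro bounded_UN) auto
  then obtain B where B: "B > 0" "\<And>y. y \<in> (\<Union>x\<in>T. \<Union>y\<in>C \<inter> ball x (e x). F y) \<Longrightarrow> norm y \<le> B"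
    using bounded_pos by metis
  show ?thesis
  proof (intro exI[of _ B] conjI ballI impI B(1))
    fix z y assume z: "z \<in> C" "norm z \<le> R" and y: "y \<in> F z"
    then have "z \<in> K" unfolding K_def by auto
    then obtain x where "x \<in> T" "z \<in> ball x (e x)" using T by auto
    then show "norm y \<le> B" using B(2)[of y] z y by blast
  qed
qed

lemma esc_fwd:
  assumes Fb: "\<And>z y. z \<in> C \<Longrightarrow> norm z \<le> R + 1 \<Longrightarrow> y \<in> F z \<Longrightarrow> norm y \<le> M" and M: "M > 0"
    and A: "farc C F f a b" and fa: "norm (f a) \<le> R" and small: "M * (b - a) < 1"
  shows "norm (f b - f a) \<le> M * (b - a)"
proof -
  have ab: "a \<le> b" using A unfolding farc_def by auto
  have fc: "continuous_on {a..b} f" using farc_cont[OF A] .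
  have inC: "\<And>t. t \<in> {a<..<b} \<Longrightarrow> f t \<in> C" using A unfolding farc_def by auto
  define S where "S = {a..b} \<inter> (\<lambda>t. norm (f t - f a)) -` {1..}"
  have Scl: "closed S" unfolding S_def
    by (rule continuous_closed_preimage) (auto intro!: continuous_intros fc)
  have nb: "norm (f t) \<le> R + 1" if "norm (f t - f a) \<le> 1" for t
    using norm_triangle_ineq[of "f t - f a" "f a"] that fa by simp
  show ?thesis
  proof (cases "S = {}")
    case True
    show ?thesis
    proof (rule farc_bound_norm[OF A])
      show "M \<ge> 0" using M by simp
      fix t y assume t: "t \<in> {a<..<b}" and y: "y \<in> F (f t)"
      have "t \<notin> S" using True by auto
      then have "norm (f t - f a) \<le> 1" using t unfolding S_def by auto
      then show "norm y \<le> M" using Fb[OF inC[OF t] nb y] by simp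
    qed
  next
    case False
    define c where "c = Inf S"
    have Sbdd: "bdd_below S" unfolding S_def by (auto intro: bdd_belowI[of _ a])
    have cS: "c \<in> S" unfolding c_def by (rule closed_contains_Inf[OF False Sbdd Scl])
    have cle: "c \<le> t" if "t \<in> S" for t unfolding c_def using cInf_lower[OF that Sbdd] .
    have cab: "a \<le> c" "c \<le> b" using cS unfolding S_def by auto
    have A': "farc C F f a c" using farc_sub[OF A order_refl cab(1) cab(2)] .
    have "norm (f c - f a) \<le> M * (c - a)"
    proof (rule farc_bound_norm[OF A'])
      show "M \<ge> 0" using M by simp
      fix t y assume t: "t \<in> {a<..<c}" and y: "y \<in> F (f t)"
      have "t \<notin> S" using cle[of t] t by auto
      then have "norm (f t - f a) \<le> 1" using t cab unfolding S_def by auto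
      moreover have "f t \<in> C" using inC t cab by auto
      ultimately show "norm y \<le> M" using Fb nb y by blast
    qed
    also have "\<dots> \<le> M * (b - a)" using cab M by (intro mult_left_mono) auto
    also have "\<dots> < 1" by (rule small)
    finally show ?thesis using cS unfolding S_def by auto
  qed
qed

lemma esc_bwd:
  assumes Fb: "\<And>z y. z \<in> C \<Longrightarrow> norm z \<le> R + 1 \<Longrightarrow> y \<in> F z \<Longrightarrow> norm y \<le> M" and M: "M > 0"
    and A: "farc C F f a b" and fb: "norm (f b) \<le> R" and small: "M * (b - a) < 1"
  shows "norm (f b - f a) \<le> M * (b - a)"
proof -
  have "norm ((\<lambda>t. f (- t)) (- a) - (\<lambda>t. f (- t)) (- b)) \<le> M * (- a - - b)"
  proof (rule esc_fwd[OF _ M farc_rev[OF A]])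
    show "norm z \<le> R + 1 \<Longrightarrow> z \<in> C \<Longrightarrow> y \<in> uminus ` F z \<Longrightarrow> norm y \<le> M" for z y
      using Fb by auto
  qed (use fb small in auto)
  then show ?thesis by (simp add: norm_minus_commute)
qed

lemma tc_intro:
  fixes x w :: "'a::real_normed_vector"
  assumes tp: "\<And>i. \<tau> i > 0" and tl: "\<tau> \<longlonglongrightarrow> 0" and inC: "\<And>i. x + \<tau> i *\<^sub>R ws i \<in> C" and wl: "ws \<longlonglongrightarrow> w"
  shows "w \<in> tangent_cone C x"
proof -
  obtain r where r: "strict_mono r" "monoseq (\<lambda>n. \<tau> (r n))" using seq_monosub[of \<tau>] by blast
  have tl': "(\<lambda>n. \<tau> (r n)) \<longlonglongrightarrow> 0" using LIMSEQ_subseq_LIMSEQ[OF tl r(1)] by (simp add: o_def)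
  have dec: "decseq (\<lambda>n. \<tau> (r n))"
  proof -
    { assume inc: "\<forall>m n. m \<le> n \<longrightarrow> \<tau> (r m) \<le> \<tau> (r n)"
      have "\<tau> (r 0) \<le> 0"
        by (rule LIMSEQ_le[OF tendsto_const tl']) (use inc in auto)
      then have False using tp[of "r 0"] by simp }
    then show ?thesis using r(2) unfolding monoseq_def decseq_def by blast
  qed
  have wl': "(\<lambda>n. ws (r n)) \<longlonglongrightarrow> w" using LIMSEQ_subseq_LIMSEQ[OF wl r(1)] by (simp add: o_def)
  show ?thesis unfolding tangent_cone_def
    using tp inC dec tl' wl' by (intro CollectI exI[of _ "\<lambda>n. \<tau> (r n)"] exI[of _ "\<lambda>n. ws (r n)"]) auto
qed

lemma osc_closed:
  assumes osc: "osc_rel F C" and v: "v \<in> C"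
  shows "closed (F v)"
  unfolding closed_sequential_limits
proof (intro allI impI)
  fix ys y assume "(\<forall>n. ys n \<in> F v) \<and> ys \<longlonglongrightarrow> y"
  then show "y \<in> F v" using osc v unfolding osc_rel_def by (metis tendsto_const)
qed

lemma usc:
  fixes F :: "'a::euclidean_space \<Rightarrow> 'b::euclidean_space set"
  assumes osc: "osc_rel F C" and lb: "locally_bounded_rel F C" and v: "v \<in> C" and \<eta>: "\<eta> > 0"
  shows "\<exists>r>0. \<forall>z\<in>C. dist z v < r \<longrightarrow> (\<forall>y\<in>F z. \<exists>y'\<in>F v. dist y y' < \<eta>)"
proof (rule ccontr)
  assume H: "\<not> ?thesis"
  obtain e0 where e0: "e0 > 0" "bounded (\<Union>y\<in>C \<inter> ball v e0. F y)" using lb v unfolding locally_bounded_rel_def by blast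
  have "\<exists>z y. z \<in> C \<and> dist z v < min e0 (inverse (real (Suc n))) \<and> y \<in> F z \<and> (\<forall>y'\<in>F v. \<eta> \<le> dist y y')" for n
  proof -
    have "min e0 (inverse (real (Suc n))) > 0" using e0 by simp
    then show ?thesis using H by (meson not_le)
  qed
  then obtain z y where zy: "\<And>n. z n \<in> C" "\<And>n. dist (z n) v < min e0 (inverse (real (Suc n)))"
      "\<And>n. y n \<in> F (z n)" "\<And>n y'. y' \<in> F v \<Longrightarrow> \<eta> \<le> dist (y n) y'"
    by metis
  have "range y \<subseteq> (\<Union>y\<in>C \<inter> ball v e0. F y)" using zy by (force simp: dist_commute)
  then have "bounded (range y)" using e0(2) bounded_subset by blast
  then obtain l r where r: "strict_mono r" "(y \<circ> r) \<longlonglongrightarrow> l" using bounded_imp_convergent_subsequence by blast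
  have "(\<lambda>n. dist (z n) v) \<longlonglongrightarrow> 0"
  proof (rule Lim_null_comparison[OF _ LIMSEQ_inverse_real_of_nat])
    show "\<forall>\<^sub>F n in sequentially. norm (dist (z n) v) \<le> inverse (real (Suc n))"
      using zy(2) by (intro always_eventually allI) (auto intro: less_imp_le)
  qed
  then have "z \<longlonglongrightarrow> v" using tendsto_dist_iff by blast
  then have zr: "(z \<circ> r) \<longlonglongrightarrow> v" using LIMSEQ_subseq_LIMSEQ r(1) by blast
  have "l \<in> F v" using osc v zy(1,3) zr r(2) unfolding osc_rel_def by (metis comp_apply)
  then have "\<And>n. \<eta> \<le> dist ((y \<circ> r) n) l" using zy(4) by simp
  moreover have "(\<lambda>n. dist ((y \<circ> r) n) l) \<longlonglongrightarrow> 0" using r(2) tendsto_dist_iff by blast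
  ultimately have "\<eta> \<le> 0" by (metis LIMSEQ_le_const)
  then show False using \<eta> by simp
qed

lemma tang_seq:
  fixes F :: "'a::euclidean_space \<Rightarrow> 'a set" and f :: "nat \<Rightarrow> real \<Rightarrow> 'a"
  assumes C: "closed C" and osc: "osc_rel F C" and lb: "locally_bounded_rel F C"
    and cv: "\<And>x. x \<in> C \<Longrightarrow> F x \<noteq> {} \<and> convex (F x)" and \<tau>: "\<tau> > 0"
    and arcs: "\<And>n. farc C F (f n) (a n) (b n)" and len: "\<And>n. a n + \<tau> \<le> b n"
    and lim: "(\<lambda>n. f n (a n)) \<longlonglongrightarrow> v"
  shows "v \<in> C \<and> F v \<inter> tangent_cone C v \<noteq> {}"
proof -
  define R where "R = norm v + 1"
  obtain M where M: "M > 0" "\<And>z y. z \<in> C \<Longrightarrow> norm z \<le> R + 1 \<Longrightarrow> y \<in> F z \<Longrightarrow> norm y \<le> M"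
    using lb_bounded[OF lb C, of "R+1"] by blast
  define d where "d n = norm (f n (a n) - v)" for n
  define h where "h n = sqrt (d n) + inverse (real (Suc n))" for n
  have d0: "d \<longlonglongrightarrow> 0" unfolding d_def using tendsto_norm_zero[OF LIM_zero[OF lim]] .
  have dge: "d n \<ge> 0" for n unfolding d_def by simp
  have h0: "h \<longlonglongrightarrow> 0" unfolding h_def using tendsto_add[OF tendsto_real_sqrt[OF d0] LIMSEQ_inverse_real_of_nat] by simp
  have hpos: "h n > 0" for n unfolding h_def using dge[of n] by (simp add: add_nonneg_pos)
  have dh: "d n \<le> sqrt (d n) * h n" for n
  proof -
    have "d n = sqrt (d n) * sqrt (d n)" using dge[of n] by simp
    also have "\<dots> \<le> sqrt (d n) * h n" unfolding h_def using dge[of n] by (intro mult_left_mono) auto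
    finally show ?thesis .
  qed
  have ev: "eventually (\<lambda>n. h n < \<tau> \<and> h n < 1 / M \<and> d n < 1) sequentially"
    using order_tendstoD(2)[OF h0 \<tau>] order_tendstoD(2)[OF h0, of "1/M"] order_tendstoD(2)[OF d0, of 1] M(1)
    by (auto intro: eventually_conj)
  then obtain N1 where N1: "\<And>n. n \<ge> N1 \<Longrightarrow> h n < \<tau> \<and> h n < 1 / M \<and> d n < 1"
    by (auto simp: eventually_sequentially)
  define p where "p n = f n (a n + h n)" for n
  define w where "w n = (1 / h n) *\<^sub>R (p n - v)" for n
  have nfa: "norm (f n (a n)) \<le> R" if "d n < 1" for n
    using norm_triangle_ineq[of "f n (a n) - v" v] that unfolding d_def R_def by simp
  have arcn: "farc C F (f n) (a n) (a n + h n)" if "n \<ge> N1" for n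
    using farc_sub[OF arcs[of n]] hpos[of n] len[of n] N1[OF that] by auto
  have inCn: "f n t \<in> C" if "t \<in> {a n<..<b n}" for n t using arcs[of n] that unfolding farc_def by auto
  have Mh: "M * h n < 1" if "n \<ge> N1" for n using N1[OF that] M(1) by (simp add: field_simps)
  have pC: "p n \<in> C" if "n \<ge> N1" for n
    unfolding p_def using inCn[of "a n + h n" n] hpos[of n] len[of n] N1[OF that] by auto
  have escn: "norm (f n t - f n (a n)) \<le> M * (t - a n)" if "n \<ge> N1" "t \<in> {a n..a n + h n}" for n t
  proof (rule esc_fwd[OF M(2) M(1)])
    show "farc C F (f n) (a n) t" using farc_sub[OF arcn[OF that(1)]] that(2) by auto
    show "norm (f n (a n)) \<le> R" using nfa N1[OF that(1)] by blast
    have "M * (t - a n) \<le> M * h n" using that(2) M(1) by (intro mult_left_mono) auto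
    then show "M * (t - a n) < 1" using Mh[OF that(1)] by simp
  qed
  have pv: "norm (p n - v) \<le> M * h n + d n" if "n \<ge> N1" for n
  proof -
    have "norm (p n - v) \<le> norm (p n - f n (a n)) + norm (f n (a n) - v)"
      using norm_triangle_ineq[of "p n - f n (a n)" "f n (a n) - v"] by simp
    also have "\<dots> \<le> M * h n + d n" using escn[OF that, of "a n + h n"] hpos[of n] unfolding p_def d_def by simp
    finally show ?thesis .
  qed
  have wv: "v + h n *\<^sub>R w n = p n" for n unfolding w_def using hpos[of n] by simp
  have wb: "norm (w n) \<le> M + 1" if "n \<ge> N1" for n
  proof -
    have "norm (w n) = norm (p n - v) / h n" unfolding w_def using hpos[of n] by simp
    also have "\<dots> \<le> (M * h n + d n) / h n" using pv[OF that] hpos[of n] by (intro divide_right_mono) auto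
    also have "\<dots> = M + d n / h n" using hpos[of n] by (simp add: field_simps)
    also have "\<dots> \<le> M + sqrt (d n)" using dh[of n] hpos[of n] by (simp add: field_simps)
    also have "\<dots> \<le> M + 1" using N1[OF that] dge[of n] by (simp add: real_sqrt_le_1_iff)
    finally show ?thesis .
  qed
  define W where "W k = w (k + N1)" for k
  have "bounded (range W)" unfolding bounded_iff W_def using wb by (intro exI[of _ "M + 1"]) auto
  then obtain w0 r where r: "strict_mono r" "(W \<circ> r) \<longlonglongrightarrow> w0" using bounded_imp_convergent_subsequence by blast
  have pl: "(\<lambda>k. p (k + N1)) \<longlonglongrightarrow> v"
  proof -
    have g0: "(\<lambda>k. M * h (k + N1) + d (k + N1)) \<longlonglongrightarrow> 0"
      using tendsto_add[OF tendsto_mult[OF tendsto_const LIMSEQ_ignore_initial_segment[OF h0]] LIMSEQ_ignore_initial_segment[OF d0]]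
      by simp
    have "(\<lambda>k. p (k + N1) - v) \<longlonglongrightarrow> 0"
      by (rule Lim_null_comparison[OF _ g0]) (use pv in auto)
    then show ?thesis using LIM_zero_iff by blast
  qed
  have "\<forall>k. p (k + N1) \<in> C" using pC by simp
  then have vC: "v \<in> C" using C[unfolded closed_sequential_limits, rule_format, of "\<lambda>k. p (k + N1)" v] pl by blast
  have tc: "w0 \<in> tangent_cone C v"
  proof (rule tc_intro[of "\<lambda>k. h (r k + N1)"])
    show "\<And>i. 0 < h (r i + N1)" using hpos by blast
    show "(\<lambda>k. h (r k + N1)) \<longlonglongrightarrow> 0"
      using LIMSEQ_subseq_LIMSEQ[OF LIMSEQ_ignore_initial_segment[OF h0] r(1)] by (simp add: o_def)
    show "\<And>i. v + h (r i + N1) *\<^sub>R (W \<circ> r) i \<in> C" using wv pC unfolding W_def by simp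
    show "(W \<circ> r) \<longlonglongrightarrow> w0" by (rule r(2))
  qed
  have inF: "w0 \<in> F v"
  proof (rule ccontr)
    assume nF: "w0 \<notin> F v"
    have cl: "closed (F v)" using osc_closed[OF osc vC] .
    obtain a0 b0 where ab0: "inner a0 w0 < b0" "\<And>x. x \<in> F v \<Longrightarrow> inner a0 x > b0"
      using separating_hyperplane_closed_point[OF conjunct2[OF cv[OF vC]] cl nF] by blast
    define e where "e = - a0"
    define c where "c = - b0"
    have ew: "inner e w0 > c" using ab0(1) unfolding e_def c_def by simp
    have ey: "inner e y < c" if "y \<in> F v" for y using ab0(2)[OF that] unfolding e_def c_def by simp
    have key: "inner e w0 \<le> c + norm e * \<eta>" if \<eta>: "\<eta> > 0" for \<eta>
    proof -
      obtain r0 where r0: "r0 > 0" "\<And>z y. z \<in> C \<Longrightarrow> dist z v < r0 \<Longrightarrow> y \<in> F z \<Longrightarrow> \<exists>y'\<in>F v. dist y y' < \<eta>"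
        using usc[OF osc lb vC \<eta>] by blast
      have bnd: "inner e y \<le> c + norm e * \<eta>" if zz: "z \<in> C" "dist z v < r0" "y \<in> F z" for z y
      proof -
        obtain y' where y': "y' \<in> F v" "dist y y' < \<eta>" using r0(2)[OF zz] by blast
        have "inner e y = inner e y' + inner e (y - y')" by (simp add: inner_diff_right)
        also have "\<dots> \<le> c + norm e * norm (y - y')"
          using ey[OF y'(1)] Cauchy_Schwarz_ineq2[of e "y - y'"] by (simp add: abs_le_iff)
        also have "\<dots> \<le> c + norm e * \<eta>" using y'(2) by (intro add_left_mono mult_left_mono) (auto simp: dist_norm)
        finally show ?thesis .
      qed
      have "eventually (\<lambda>n. M * h n + d n < r0) sequentially"
        using order_tendstoD(2)[OF tendsto_add[OF tendsto_mult[OF tendsto_const[of M] h0] d0], of r0] r0(1) by simp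
      then obtain N2 where N2: "\<And>n. n \<ge> N2 \<Longrightarrow> M * h n + d n < r0" by (auto simp: eventually_sequentially)
      have wn: "inner e (w n) \<le> c + norm e * \<eta> + norm e * sqrt (d n)" if n: "n \<ge> max N1 N2" for n
      proof -
        have n1: "n \<ge> N1" and n2: "n \<ge> N2" using n by auto
        have "inner e (p n - f n (a n)) \<le> (c + norm e * \<eta>) * (a n + h n - a n)"
          unfolding p_def
        proof (rule farc_bound_inner[OF arcn[OF n1]])
          fix t y assume t: "t \<in> {a n<..<a n + h n}" and y: "y \<in> F (f n t)"
          have tC: "f n t \<in> C" using inCn[of t n] t N1[OF n1] len[of n] by auto
          have "norm (f n t - v) \<le> norm (f n t - f n (a n)) + d n"
            using norm_triangle_ineq[of "f n t - f n (a n)" "f n (a n) - v"] unfolding d_def by simp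
          also have "\<dots> \<le> M * (t - a n) + d n" using escn[OF n1, of t] t by auto
          also have "\<dots> \<le> M * h n + d n" using t M(1) by (intro add_right_mono mult_left_mono) auto
          also have "\<dots> < r0" using N2[OF n2] .
          finally show "inner e y \<le> c + norm e * \<eta>" using bnd[OF tC _ y] by (simp add: dist_norm)
        qed
        then have 1: "inner e (p n - f n (a n)) \<le> (c + norm e * \<eta>) * h n" by simp
        have 2: "inner e (f n (a n) - v) \<le> norm e * d n"
          using Cauchy_Schwarz_ineq2[of e "f n (a n) - v"] unfolding d_def by (simp add: abs_le_iff)
        have "inner e (w n) = (inner e (p n - f n (a n)) + inner e (f n (a n) - v)) / h n"
          unfolding w_def by (simp add: inner_diff_right algebra_simps divide_inverse)
        also have "\<dots> \<le> ((c + norm e * \<eta>) * h n + norm e * d n) / h n"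
          using 1 2 hpos[of n] by (intro divide_right_mono) auto
        also have "\<dots> = c + norm e * \<eta> + norm e * (d n / h n)" using hpos[of n] by (simp add: field_simps)
        also have "\<dots> \<le> c + norm e * \<eta> + norm e * sqrt (d n)"
          using dh[of n] hpos[of n] by (intro add_left_mono mult_left_mono) (auto simp: field_simps)
        finally show ?thesis .
      qed
      have X: "(\<lambda>k. inner e ((W \<circ> r) k)) \<longlonglongrightarrow> inner e w0" using tendsto_inner[OF tendsto_const r(2)] .
      have dsub: "(\<lambda>k. d (r k + N1)) \<longlonglongrightarrow> 0"
        using LIMSEQ_subseq_LIMSEQ[OF LIMSEQ_ignore_initial_segment[OF d0] r(1)] by (simp add: o_def)
      have Y: "(\<lambda>k. c + norm e * \<eta> + norm e * sqrt (d (r k + N1))) \<longlonglongrightarrow> c + norm e * \<eta>"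
        using tendsto_add[OF tendsto_const tendsto_mult[OF tendsto_const tendsto_real_sqrt[OF dsub]]] by simp
      show ?thesis
      proof (rule LIMSEQ_le[OF X Y], intro exI allI impI)
        fix k assume k: "k \<ge> max N1 N2"
        have "r k + N1 \<ge> max N1 N2" using seq_suble[OF r(1), of k] k by auto
        then show "inner e ((W \<circ> r) k) \<le> c + norm e * \<eta> + norm e * sqrt (d (r k + N1))"
          using wn unfolding W_def by simp
      qed
    qed
    define \<eta> where "\<eta> = (inner e w0 - c) / (2 * (norm e + 1))"
    have "2 * (norm e + 1) > 0" by (simp add: add_nonneg_pos)
    then have \<eta>p: "\<eta> > 0" unfolding \<eta>_def using ew by (intro divide_pos_pos) auto
    have "norm e * \<eta> \<le> (norm e + 1) * \<eta>" using \<eta>p by (simp add: mult_right_mono)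
    also have "\<dots> = (inner e w0 - c) / 2"
    proof -
      have nz: "norm e + 1 \<noteq> 0" by (metis add_nonneg_pos norm_ge_zero zero_less_one less_irrefl)
      show ?thesis unfolding \<eta>_def using nz by (simp add: field_simps)
    qed
    finally have "norm e * \<eta> < inner e w0 - c" using ew by simp
    then show False using key[OF \<eta>p] by simp
  qed
  show ?thesis using vC tc inF by blast
qed

lemma tang_fwd:
  fixes F :: "'a::euclidean_space \<Rightarrow> 'a set"
  assumes C: "closed C" and osc: "osc_rel F C" and lb: "locally_bounded_rel F C"
    and cv: "\<And>x. x \<in> C \<Longrightarrow> F x \<noteq> {} \<and> convex (F x)" and K: "compact K"
    and noT: "\<And>v. v \<in> K \<Longrightarrow> v \<in> C \<Longrightarrow> F v \<inter> tangent_cone C v = {}" and \<tau>: "\<tau> > 0"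
  shows "\<exists>\<delta>>0. \<forall>f a b v. farc C F f a b \<and> a + \<tau> \<le> b \<and> v \<in> K \<longrightarrow> \<delta> \<le> norm (f a - v)"
proof (rule ccontr)
  assume H: "\<not> ?thesis"
  have "\<exists>f a b v. farc C F f a b \<and> a + \<tau> \<le> b \<and> v \<in> K \<and> norm (f a - v) < inverse (real (Suc n))" for n
  proof -
    have "inverse (real (Suc n)) > 0" by simp
    then show ?thesis using H by (meson not_le)
  qed
  then obtain f a b v where fab: "\<And>n. farc C F (f n) (a n) (b n)" "\<And>n. a n + \<tau> \<le> b n" "\<And>n. v n \<in> K"
      "\<And>n. norm (f n (a n) - v n) < inverse (real (Suc n))"
    by metis
  obtain l r where l: "l \<in> K" and r: "strict_mono r" "(v \<circ> r) \<longlonglongrightarrow> l"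
    using compact_imp_seq_compact[OF K] fab(3) unfolding seq_compact_def by metis
  have "(\<lambda>n. f n (a n) - v n) \<longlonglongrightarrow> 0"
    by (rule Lim_null_comparison[OF _ LIMSEQ_inverse_real_of_nat], rule always_eventually, use fab(4) in \<open>auto intro: less_imp_le\<close>)
  then have "(\<lambda>n. f (r n) (a (r n)) - v (r n)) \<longlonglongrightarrow> 0"
    using LIMSEQ_subseq_LIMSEQ[OF _ r(1)] by (simp add: o_def)
  from tendsto_add[OF this r(2)] have lim: "(\<lambda>n. f (r n) (a (r n))) \<longlonglongrightarrow> l"
    by (simp add: o_def)
  have "l \<in> C \<and> F l \<inter> tangent_cone C l \<noteq> {}"
    by (rule tang_seq[OF C osc lb cv \<tau>, of "\<lambda>n. f (r n)" "\<lambda>n. a (r n)" "\<lambda>n. b (r n)"]) (use fab lim in auto)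
  then show False using noT[OF l] by blast
qed

lemma neg_osc: "osc_rel F C \<Longrightarrow> osc_rel (\<lambda>x. uminus ` F x) C"
  unfolding osc_rel_def
proof (intro ballI allI impI)
  fix x xs ys y
  assume osc: "\<forall>x\<in>C. \<forall>xs ys y. (\<forall>i. xs i \<in> C \<and> ys i \<in> F (xs i)) \<and> xs \<longlonglongrightarrow> x \<and> ys \<longlonglongrightarrow> y \<longrightarrow> y \<in> F x"
    and x: "x \<in> C" and H: "(\<forall>i. xs i \<in> C \<and> ys i \<in> uminus ` F (xs i)) \<and> xs \<longlonglongrightarrow> x \<and> ys \<longlonglongrightarrow> y"
  have "- ys i \<in> F (xs i)" for i
  proof -
    have "ys i \<in> uminus ` F (xs i)" using H by blast
    then obtain z where "z \<in> F (xs i)" "ys i = - z" by blast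
    then show ?thesis by simp
  qed
  moreover have "(\<lambda>i. - ys i) \<longlonglongrightarrow> - y" using H tendsto_minus by blast
  ultimately have "(\<forall>i. xs i \<in> C \<and> - ys i \<in> F (xs i)) \<and> xs \<longlonglongrightarrow> x \<and> (\<lambda>i. - ys i) \<longlonglongrightarrow> - y"
    using H by simp
  then have "- y \<in> F x" by (rule osc[rule_format, OF x])
  then show "y \<in> uminus ` F x" by (metis image_eqI minus_minus)
qed

lemma neg_lb: "locally_bounded_rel F C \<Longrightarrow> locally_bounded_rel (\<lambda>x. uminus ` F x) C"
  unfolding locally_bounded_rel_def
proof (intro ballI)
  fix x assume lb: "\<forall>x\<in>C. \<exists>e>0. bounded (\<Union>y\<in>C \<inter> ball x e. F y)" and x: "x \<in> C"
  obtain e where e: "e > 0" "bounded (\<Union>y\<in>C \<inter> ball x e. F y)" using lb x by blast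
  then obtain B where B: "\<And>z. z \<in> (\<Union>y\<in>C \<inter> ball x e. F y) \<Longrightarrow> norm z \<le> B" unfolding bounded_iff by blast
  have "bounded (\<Union>y\<in>C \<inter> ball x e. uminus ` F y)" unfolding bounded_iff using B by (intro exI[of _ B]) auto
  then show "\<exists>e>0. bounded (\<Union>y\<in>C \<inter> ball x e. uminus ` F y)" using e(1) by blast
qed

lemma tang_bwd:
  fixes F :: "'a::euclidean_space \<Rightarrow> 'a set"
  assumes C: "closed C" and osc: "osc_rel F C" and lb: "locally_bounded_rel F C"
    and cv: "\<And>x. x \<in> C \<Longrightarrow> F x \<noteq> {} \<and> convex (F x)" and K: "compact K"
    and noT: "\<And>v. v \<in> K \<Longrightarrow> v \<in> C \<Longrightarrow> uminus ` F v \<inter> tangent_cone C v = {}" and \<tau>: "\<tau> > 0"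
  shows "\<exists>\<delta>>0. \<forall>f a b v. farc C F f a b \<and> a + \<tau> \<le> b \<and> v \<in> K \<longrightarrow> \<delta> \<le> norm (f b - v)"
proof -
  have cv': "uminus ` F x \<noteq> {} \<and> convex (uminus ` F x)" if "x \<in> C" for x
    using cv[OF that] convex_negations by auto
  obtain \<delta> where \<delta>: "\<delta> > 0" and H: "\<forall>f a b v. farc C (\<lambda>x. uminus ` F x) f a b \<and> a + \<tau> \<le> b \<and> v \<in> K \<longrightarrow> \<delta> \<le> norm (f a - v)"
    using tang_fwd[OF C neg_osc[OF osc] neg_lb[OF lb] cv' K noT \<tau>] by blast
  show ?thesis
  proof (intro exI[of _ \<delta>] conjI allI impI \<delta>)
    fix f a b v assume A: "farc C F f a b \<and> a + \<tau> \<le> b \<and> v \<in> K"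
    have "\<delta> \<le> norm ((\<lambda>t. f (- t)) (- b) - v)"
      using H farc_rev[of C F f a b] A by force
    then show "\<delta> \<le> norm (f b - v)" by simp
  qed
qed

lemma htd_dec:
  assumes "hybrid_time_domain E" "(T, J) \<in> E"
  shows "\<exists>tt :: nat \<Rightarrow> real. tt 0 = 0 \<and> (\<forall>j\<le>J. tt j \<le> tt (Suc j)) \<and>
        E \<inter> ({0..T} \<times> {0..J}) = (\<Union>j\<in>{0..J}. {tt j..tt (Suc j)} \<times> {j})"
  using assms unfolding hybrid_time_domain_def by blast

lemma htd_nonneg: "hybrid_time_domain E \<Longrightarrow> (t, j) \<in> E \<Longrightarrow> 0 \<le> t"
  unfolding hybrid_time_domain_def by auto

lemma tt_mono:
  assumes "\<forall>j\<le>J. tt j \<le> (tt (Suc j) :: real)" "i \<le> i'" "i' \<le> Suc J"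
  shows "tt i \<le> tt i'"
  using assms(2,3)
proof (induction i')
  case 0 then show ?case by simp
next
  case (Suc k)
  show ?case
  proof (cases "i = Suc k")
    case True then show ?thesis by simp
  next
    case False
    then have "tt i \<le> tt k" using Suc by auto
    also have "tt k \<le> tt (Suc k)" using assms(1) Suc.prems by auto
    finally show ?thesis .
  qed
qed

lemma htd_mem:
  assumes "tt 0 = 0" "\<forall>j\<le>J. tt j \<le> (tt (Suc j) :: real)"
    "E \<inter> ({0..T} \<times> {0..J}) = (\<Union>j\<in>{0..J}. {tt j..tt (Suc j)} \<times> {j})" "j \<le> J"
  shows "(0 \<le> t \<and> t \<le> T \<and> (t, j) \<in> E) \<longleftrightarrow> (tt j \<le> t \<and> t \<le> tt (Suc j))"
proof -
  have "(t, j) \<in> E \<inter> ({0..T} \<times> {0..J}) \<longleftrightarrow> (t, j) \<in> (\<Union>j\<in>{0..J}. {tt j..tt (Suc j)} \<times> {j})"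
    using assms(3) by simp
  then show ?thesis using assms(4) by auto
qed

lemma htd_last:
  assumes "hybrid_time_domain E" "(T, J) \<in> E" "tt 0 = 0" "\<forall>j\<le>J. tt j \<le> (tt (Suc j) :: real)"
    "E \<inter> ({0..T} \<times> {0..J}) = (\<Union>j\<in>{0..J}. {tt j..tt (Suc j)} \<times> {j})"
  shows "tt (Suc J) = T"
proof -
  have T0: "0 \<le> T" using htd_nonneg assms(1,2) by blast
  have m: "\<And>t. (0 \<le> t \<and> t \<le> T \<and> (t, J) \<in> E) \<longleftrightarrow> (tt J \<le> t \<and> t \<le> tt (Suc J))"
    using htd_mem[OF assms(3,4,5) order_refl] .
  have 1: "T \<le> tt (Suc J)" using m[of T] T0 assms(2) by auto
  have "tt J \<ge> 0" using tt_mono[OF assms(4), of 0 J] assms(3) by simp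
  then have "tt (Suc J) \<le> T" using m[of "tt (Suc J)"] assms(4) by auto
  then show ?thesis using 1 by simp
qed

lemma Ij_convex:
  assumes H: "hybrid_time_domain E" and 1: "(t1, j) \<in> E" and 2: "(t2, j) \<in> E" and "t1 \<le> t" "t \<le> t2"
  shows "(t, j) \<in> E"
proof -
  obtain tt where tt: "tt 0 = 0" "\<forall>i\<le>j. tt i \<le> tt (Suc i)"
      "E \<inter> ({0..t2} \<times> {0..j}) = (\<Union>i\<in>{0..j}. {tt i..tt (Suc i)} \<times> {i})"
    using htd_dec[OF H 2] by blast
  have m: "\<And>s. (0 \<le> s \<and> s \<le> t2 \<and> (s, j) \<in> E) \<longleftrightarrow> (tt j \<le> s \<and> s \<le> tt (Suc j))"
    using htd_mem[OF tt order_refl] .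
  have last: "tt (Suc j) = t2" using htd_last[OF H 2 tt] .
  have "tt j \<le> t1" using m[of t1] 1 htd_nonneg[OF H 1] assms by auto
  then have "tt j \<le> t \<and> t \<le> tt (Suc j)" using assms last by auto
  then show ?thesis using m[of t] by blast
qed

lemma htd_prev:
  assumes H: "hybrid_time_domain E" and tj: "(t, j) \<in> E"
  shows "\<exists>a. a \<le> t \<and> (a, j) \<in> E \<and> (\<forall>t'. (t', j) \<in> E \<longrightarrow> a \<le> t') \<and> (j = 0 \<longrightarrow> a = 0) \<and> (0 < j \<longrightarrow> (a, j - 1) \<in> E)"
proof -
  obtain tt where tt: "tt 0 = 0" "\<forall>i\<le>j. tt i \<le> tt (Suc i)"
      "E \<inter> ({0..t} \<times> {0..j}) = (\<Union>i\<in>{0..j}. {tt i..tt (Suc i)} \<times> {i})"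
    using htd_dec[OF H tj] by blast
  have m: "\<And>s. (0 \<le> s \<and> s \<le> t \<and> (s, j) \<in> E) \<longleftrightarrow> (tt j \<le> s \<and> s \<le> tt (Suc j))"
    using htd_mem[OF tt order_refl] .
  have last: "tt (Suc j) = t" using htd_last[OF H tj tt] .
  have tj0: "tt j \<ge> 0" using tt_mono[OF tt(2), of 0 j] tt(1) by simp
  have tjt: "tt j \<le> t" using tt(2) last by auto
  have aj: "(tt j, j) \<in> E" using m[of "tt j"] tj0 tjt last by auto
  have lower: "\<forall>t'. (t', j) \<in> E \<longrightarrow> tt j \<le> t'"
  proof (intro allI impI)
    fix t' assume t': "(t', j) \<in> E"
    show "tt j \<le> t'"
    proof (cases "t' \<le> t")
      case True then show ?thesis using m[of t'] t' htd_nonneg[OF H t'] by auto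
    next
      case False then show ?thesis using tjt by auto
    qed
  qed
  have prevj: "(tt j, j - 1) \<in> E" if "0 < j"
  proof -
    have mm: "\<And>s. (0 \<le> s \<and> s \<le> t \<and> (s, j - 1) \<in> E) \<longleftrightarrow> (tt (j - 1) \<le> s \<and> s \<le> tt (Suc (j - 1)))"
      using htd_mem[OF tt, of "j - 1"] by simp
    have "tt (j - 1) \<le> tt j" using tt(2) that by (metis Suc_pred' diff_le_self)
    then show ?thesis using mm[of "tt j"] tj0 tjt that by simp
  qed
  show ?thesis using tjt aj lower prevj tt(1) by (intro exI[of _ "tt j"]) auto
qed

definition mono_dom :: "(real \<times> nat) set \<Rightarrow> bool" where
  "mono_dom E \<longleftrightarrow> (\<forall>t1 j1 t2 j2. (t1, j1) \<in> E \<longrightarrow> (t2, j2) \<in> E \<longrightarrow> j1 < j2 \<longrightarrow> t1 \<le> t2)"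

lemma htd_next:
  assumes H: "hybrid_time_domain E" and tc: "t_complete E" and mono: "mono_dom E" and tj: "(t, j) \<in> E"
    and bd: "\<And>t'. (t', j) \<in> E \<Longrightarrow> t' < B"
  shows "\<exists>b. t \<le> b \<and> (b, j) \<in> E \<and> (b, Suc j) \<in> E \<and> (\<forall>t'. (t', j) \<in> E \<longrightarrow> t' \<le> b)"
proof -
  obtain T J where TJ: "(T, J) \<in> E" "T > B" using tc unfolding t_complete_def by blast
  have tB: "t < B" using bd[OF tj] .
  have jJ: "j < J"
  proof (rule ccontr)
    assume "\<not> j < J"
    then have "J < j \<or> J = j" by auto
    then show False
    proof
      assume "J < j"
      then have "T \<le> t" using mono TJ(1) tj unfolding mono_dom_def by blast
      then show False using TJ tB by simp
    next
      assume "J = j"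
      then show False using bd[of T] TJ by simp
    qed
  qed
  obtain tt where tt: "tt 0 = 0" "\<forall>i\<le>J. tt i \<le> tt (Suc i)"
      "E \<inter> ({0..T} \<times> {0..J}) = (\<Union>i\<in>{0..J}. {tt i..tt (Suc i)} \<times> {i})"
    using htd_dec[OF H TJ(1)] by blast
  have last: "tt (Suc J) = T" using htd_last[OF H TJ(1) tt] .
  have m: "\<And>s. (0 \<le> s \<and> s \<le> T \<and> (s, j) \<in> E) \<longleftrightarrow> (tt j \<le> s \<and> s \<le> tt (Suc j))"
    using htd_mem[OF tt] jJ by simp
  have m2: "\<And>s. (0 \<le> s \<and> s \<le> T \<and> (s, Suc j) \<in> E) \<longleftrightarrow> (tt (Suc j) \<le> s \<and> s \<le> tt (Suc (Suc j)))"
    using htd_mem[OF tt] jJ by simp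
  define b where "b = tt (Suc j)"
  have b0: "0 \<le> b" unfolding b_def using tt_mono[OF tt(2), of 0 "Suc j"] tt(1) jJ by simp
  have bT: "b \<le> T" unfolding b_def using tt_mono[OF tt(2), of "Suc j" "Suc J"] last jJ by simp
  have tjj: "tt j \<le> tt (Suc j)" using tt(2) jJ by simp
  have tjj2: "tt (Suc j) \<le> tt (Suc (Suc j))" using tt(2) jJ by simp
  have le: "\<forall>t'. (t', j) \<in> E \<longrightarrow> t' \<le> b"
    using m bd TJ(2) htd_nonneg[OF H] unfolding b_def by (meson less_trans less_imp_le)
  have "(b, j) \<in> E" using m[of b] b0 bT tjj unfolding b_def by simp
  moreover have "(b, Suc j) \<in> E" using m2[of b] b0 bT tjj2 unfolding b_def by simp
  moreover have "t \<le> b" using le tj by blast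
  ultimately show ?thesis using le by blast
qed

lemma sol_htd: "is_solution C F D G E \<phi> \<Longrightarrow> hybrid_time_domain E"
  unfolding is_solution_def by blast

lemma sol_arc:
  assumes sol: "is_solution C F D G E \<phi>" and 1: "(t1, j) \<in> E" and 2: "(t2, j) \<in> E" and le: "t1 \<le> t2"
  shows "farc C F (\<lambda>t. \<phi> (t, j)) t1 t2"
proof -
  have H: "hybrid_time_domain E" using sol_htd[OF sol] .
  have sub: "{t1..t2} \<subseteq> Ij E j" unfolding Ij_def using Ij_convex[OF H 1 2] by auto
  have "locally_abs_continuous_on (Ij E j) (\<lambda>t. \<phi> (t, j))" using sol unfolding is_solution_def by blast
  then have ac: "abs_continuous_on_interval t1 t2 (\<lambda>t. \<phi> (t, j))"
    using sub unfolding locally_abs_continuous_on_def by blast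
  show ?thesis
  proof (cases "t1 = t2")
    case True
    have "\<forall>t\<in>{t1..t2} - {t1}. \<exists>v. ((\<lambda>t. \<phi> (t, j)) has_vector_derivative v) (at t within {t1..t2}) \<and> v \<in> F (\<phi> (t, j))"
      using True by auto
    then show ?thesis unfolding farc_def using ac le True by (intro conjI exI[of _ "{t1}"]) auto
  next
    case False
    then have lt: "t1 < t2" using le by simp
    have intsub: "{t1<..<t2} \<subseteq> interior (Ij E j)" using sub by (intro interior_maximal) auto
    then have "interior (Ij E j) \<noteq> {}" using lt by (metis dense empty_iff greaterThanLessThan_iff subset_empty)
    then have X: "(\<forall>t\<in>interior (Ij E j). \<phi> (t, j) \<in> C) \<and>
        (\<exists>N. negligible N \<and> (\<forall>t\<in>Ij E j - N. \<exists>v.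
            ((\<lambda>s. \<phi> (s, j)) has_vector_derivative v) (at t within Ij E j) \<and> v \<in> F (\<phi> (t, j))))"
      using sol unfolding is_solution_def by blast
    then obtain N where N: "negligible N" and D: "\<And>t. t\<in>Ij E j - N \<Longrightarrow> \<exists>v.
            ((\<lambda>s. \<phi> (s, j)) has_vector_derivative v) (at t within Ij E j) \<and> v \<in> F (\<phi> (t, j))" by blast
    have "\<exists>v. ((\<lambda>s. \<phi> (s, j)) has_vector_derivative v) (at t within {t1..t2}) \<and> v \<in> F (\<phi> (t, j))"
      if tt: "t \<in> {t1..t2} - N" for t
    proof -
      obtain v where "((\<lambda>s. \<phi> (s, j)) has_vector_derivative v) (at t within Ij E j)" "v \<in> F (\<phi> (t, j))"
        using D[of t] tt sub by blast
      then show ?thesis using has_vector_derivative_within_subset[OF _ sub] by blast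
    qed
    moreover have "\<forall>t\<in>{t1<..<t2}. \<phi> (t, j) \<in> C" using X intsub by blast
    ultimately show ?thesis unfolding farc_def using ac le N by blast
  qed
qed

lemma exact_fwd:
  fixes F :: "'a::euclidean_space \<Rightarrow> 'a set"
  assumes C: "closed C" and osc: "osc_rel F C" and lb: "locally_bounded_rel F C"
    and cv: "\<And>x. x \<in> C \<Longrightarrow> F x \<noteq> {} \<and> convex (F x)"
    and noT: "\<And>v. v \<in> D \<Longrightarrow> v \<in> C \<Longrightarrow> F v \<inter> tangent_cone C v = {}"
    and A: "farc C F f a b" and ab: "a < b" and fa: "f a \<in> D"
  shows False
proof -
  have "\<exists>\<delta>>0. \<forall>g a' b' v. farc C F g a' b' \<and> a' + (b - a) \<le> b' \<and> v \<in> {f a} \<longrightarrow> \<delta> \<le> norm (g a' - v)"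
    by (rule tang_fwd[OF C osc lb cv]) (use noT fa ab in auto)
  then obtain \<delta> where "\<delta> > 0" "\<delta> \<le> norm (f a - f a)" using A by fastforce
  then show False by simp
qed

lemma mono_sol:
  assumes sol: "is_solution C F D G E \<phi>" and exact: "\<And>f a b. farc C F f a b \<Longrightarrow> a < b \<Longrightarrow> f a \<in> D \<Longrightarrow> False"
  shows "mono_dom E"
  unfolding mono_dom_def
proof (intro allI impI)
  fix t1 j1 t2 j2 assume 1: "(t1, j1) \<in> E" and 2: "(t2, j2) \<in> E" and jj: "j1 < j2"
  have H: "hybrid_time_domain E" using sol_htd[OF sol] .
  show "t1 \<le> t2"
  proof (rule ccontr)
    assume "\<not> t1 \<le> t2"
    then have lt: "t2 < t1" by simp
    obtain tt where tt: "tt 0 = 0" "\<forall>i\<le>j2. tt i \<le> tt (Suc i)"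
        "E \<inter> ({0..t2} \<times> {0..j2}) = (\<Union>i\<in>{0..j2}. {tt i..tt (Suc i)} \<times> {i})"
      using htd_dec[OF H 2] by blast
    have last: "tt (Suc j2) = t2" using htd_last[OF H 2 tt] .
    have m: "\<And>s. (0 \<le> s \<and> s \<le> t2 \<and> (s, j1) \<in> E) \<longleftrightarrow> (tt j1 \<le> s \<and> s \<le> tt (Suc j1))"
      using htd_mem[OF tt] jj by simp
    have m2: "\<And>s. (0 \<le> s \<and> s \<le> t2 \<and> (s, Suc j1) \<in> E) \<longleftrightarrow> (tt (Suc j1) \<le> s \<and> s \<le> tt (Suc (Suc j1)))"
      using htd_mem[OF tt] jj by simp
    have a0: "0 \<le> tt j1" using tt_mono[OF tt(2), of 0 j1] tt(1) jj by simp
    have a1: "tt j1 \<le> tt (Suc j1)" using tt(2) jj by simp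
    have a2: "tt (Suc j1) \<le> t2" using tt_mono[OF tt(2), of "Suc j1" "Suc j2"] last jj by simp
    have a3: "tt (Suc j1) \<le> tt (Suc (Suc j1))" using tt(2) jj by simp
    have s1: "(tt j1, j1) \<in> E" using m[of "tt j1"] a0 a1 a2 by simp
    have s2: "(t2, j1) \<in> E" using Ij_convex[OF H s1 1] a1 a2 lt by simp
    have "t2 \<le> tt (Suc j1)" using m[of t2] s2 htd_nonneg[OF H 2] by simp
    then have eq: "tt (Suc j1) = t2" using a2 by simp
    have s3: "(t2, Suc j1) \<in> E" using m2[of t2] eq a3 htd_nonneg[OF H 2] by simp
    have "\<phi> (t2, j1) \<in> D" using sol s2 s3 unfolding is_solution_def by blast
    moreover have "farc C F (\<lambda>t. \<phi> (t, j1)) t2 t1" using sol_arc[OF sol s2 1] lt by simp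
    ultimately show False using exact lt by force
  qed
qed

lemma rho_lt:
  assumes "rhoA C D G x y < s" "setA C D G \<noteq> {}"
  shows "\<exists>u v. (u, v) \<in> setA C D G \<and> norm (x - u) < s \<and> norm (y - v) < s"
proof -
  have "\<exists>p\<in>setA C D G. norm ((x, y) - p) < s"
    using assms unfolding rhoA_def by (subst (asm) cINF_less_iff) (auto intro: bdd_belowI[of _ 0])
  then obtain u v where uv: "(u, v) \<in> setA C D G" "norm ((x, y) - (u, v)) < s" by auto
  have "norm (x - u) \<le> norm ((x, y) - (u, v))" using norm_fst_le[of "x - u" "y - v"] by simp
  moreover have "norm (y - v) \<le> norm ((x, y) - (u, v))" using norm_snd_le[of "y - v" "x - u"] by simp
  ultimately show ?thesis using uv by force
qed

lemma g_cont:
  fixes G :: "'a::euclidean_space \<Rightarrow> 'a set"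
  assumes osc: "osc_rel G D" and lb: "locally_bounded_rel G D" and sv: "single_valued_on G D"
  shows "continuous_on D (\<lambda>x. the_elem (G x))"
  unfolding continuous_on_iff
proof (intro ballI allI impI)
  fix x e assume x: "x \<in> D" and e: "(e::real) > 0"
  have Gs: "G z = {the_elem (G z)}" if "z \<in> D" for z using sv that unfolding single_valued_on_def by auto
  obtain r where r: "r > 0" "\<And>z. z \<in> D \<Longrightarrow> dist z x < r \<Longrightarrow> \<forall>y\<in>G z. \<exists>y'\<in>G x. dist y y' < e"
    using usc[OF osc lb x e] by blast
  show "\<exists>d>0. \<forall>x'\<in>D. dist x' x < d \<longrightarrow> dist (the_elem (G x')) (the_elem (G x)) < e"
  proof (intro exI[of _ r] conjI ballI impI r(1))
    fix z assume z: "z \<in> D" "dist z x < r"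
    have "\<forall>y\<in>G z. \<exists>y'\<in>G x. dist y y' < e" using r(2)[OF z] .
    then show "dist (the_elem (G z)) (the_elem (G x)) < e" using Gs[OF z(1)] Gs[OF x] by force
  qed
qed



lemma sol_jump:
  assumes "is_solution C F D G E \<phi>" "(t, j) \<in> E" "(t, Suc j) \<in> E"
  shows "\<phi> (t, j) \<in> D \<and> \<phi> (t, Suc j) \<in> G (\<phi> (t, j))"
  using assms unfolding is_solution_def by blast

lemma tri: "norm (a - c) \<le> norm (a - b) + norm (b - (c::'a::real_normed_vector))"
  using norm_triangle_ineq[of "a - b" "b - c"] by simp

lemma nrm_le: "norm (a::'a::real_normed_vector) \<le> norm b + norm (a - b)"
  using norm_triangle_ineq[of b "a - b"] by simp

theorem theorem1:
  fixes C D :: "'a::euclidean_space set"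
    and F G :: "'a \<Rightarrow> 'a set"
    and Es :: "(real \<times> nat) set" and \<phi>s :: "real \<times> nat \<Rightarrow> 'a"
  assumes hbc: "hybrid_basic_conditions C F D G"
    and sol: "is_solution C F D G Es \<phi>s" and tc: "t_complete Es"
    and i: "set_image G D \<inter> D = {}" "set_image G D \<subseteq> C" "single_valued_on G D" "proper_map G"
    and ii: "\<forall>x\<in>C \<inter> D. F x \<inter> tangent_cone C x = {}"
    and iii: "\<forall>x\<in>C \<inter> set_image G D. uminus ` F x \<inter> tangent_cone C x = {}"
    and iv: "bounded D \<or> bounded_solution Es \<phi>s"
  shows "\<forall>\<epsilon>>0. \<exists>s>0. \<forall>E \<phi>. is_solution C F D G E \<phi> \<and> t_complete E \<and>
            norm (\<phi>s (0, 0) - \<phi> (0, 0)) < s \<and>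
            (\<forall>(t, j)\<in>Es. \<exists>j'. (t, j') \<in> E \<and> rhoA C D G (\<phi>s (t, j)) (\<phi> (t, j')) < s)
          \<longrightarrow> (\<forall>(t, j)\<in>Es. \<exists>(t', j')\<in>E. \<bar>t - t'\<bar> < \<epsilon> \<and> norm (\<phi>s (t, j) - \<phi> (t', j')) < \<epsilon>)"
proof (intro allI impI)
  fix \<epsilon> :: real assume \<epsilon>0: "\<epsilon> > 0"
  define \<epsilon>1 where "\<epsilon>1 = min \<epsilon> 1"
  have \<epsilon>1: "\<epsilon>1 > 0" "\<epsilon>1 \<le> \<epsilon>" "\<epsilon>1 \<le> 1" unfolding \<epsilon>1_def using \<epsilon>0 by auto
  have C: "closed C" and Dcl: "closed D" and oscF: "osc_rel F C" and lbF: "locally_bounded_rel F C"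
    and cvF: "\<And>x. x \<in> C \<Longrightarrow> F x \<noteq> {} \<and> convex (F x)"
    and oscG: "osc_rel G D" and lbG: "locally_bounded_rel G D"
    using hbc unfolding hybrid_basic_conditions_def by auto
  define g where "g x = the_elem (G x)" for x
  have Gs: "G x = {g x}" if "x \<in> D" for x using i(3) that unfolding single_valued_on_def g_def by auto
  have gcont: "continuous_on D g" unfolding g_def using g_cont[OF oscG lbG i(3)] .
  have gD: "g x \<notin> D" if "x \<in> D" for x using i(1) Gs[OF that] that unfolding set_image_def by blast
  have gC: "g x \<in> C" if "x \<in> D" for x using i(2) Gs[OF that] that unfolding set_image_def by blast
  have gimg: "g x \<in> C \<inter> set_image G D" if "x \<in> D" for x using gC[OF that] Gs[OF that] that unfolding set_image_def by blast
  have exact: "\<And>f a b. farc C F f a b \<Longrightarrow> a < b \<Longrightarrow> f a \<in> D \<Longrightarrow> False"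
    using exact_fwd[OF C oscF lbF cvF] ii by blast
  have jump: "\<phi> (t, j) \<in> D \<and> \<phi> (t, Suc j) = g (\<phi> (t, j))"
    if "is_solution C F D G E \<phi>" "(t, j) \<in> E" "(t, Suc j) \<in> E" for E \<phi> t j
    using sol_jump[OF that] Gs by blast
  define Pre where "Pre r = D \<inter> {x. G x \<inter> cball 0 r \<noteq> {}}" for r :: real
  have Pre_c: "compact (Pre r)" for r
    unfolding Pre_def using i(4) Dcl unfolding proper_map_def by (simp add: closed_Int_compact)
  have Pre_sub: "Pre r \<subseteq> D" for r unfolding Pre_def by auto
  have Pre_I: "x \<in> Pre r" if "x \<in> D" "norm (g x) \<le> r" for x r using that Gs[OF that(1)] unfolding Pre_def by auto
  have Pre_g: "norm (g x) \<le> r" if "x \<in> Pre r" for x r using that Gs unfolding Pre_def by auto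
  obtain KD where KDc: "compact KD" and KDD: "KD \<subseteq> D"
    and P1: "\<And>t j v. (t, j) \<in> Es \<Longrightarrow> v \<in> D \<Longrightarrow> norm (\<phi>s (t, j) - g v) < 1 \<Longrightarrow> v \<in> KD"
    and P2: "\<And>t j u. (t, j) \<in> Es \<Longrightarrow> u \<in> D \<Longrightarrow> norm (\<phi>s (t, j) - u) < 1 \<Longrightarrow> u \<in> KD"
  proof (cases "bounded D")
    case True
    then have "compact D" using Dcl compact_eq_bounded_closed by blast
    then show ?thesis using that[of D] by blast
  next
    case False
    then obtain R0 where R0: "\<And>p. p \<in> Es \<Longrightarrow> norm (\<phi>s p) \<le> R0"
      using iv unfolding bounded_solution_def by blast
    define K where "K = D \<inter> cball 0 (R0 + 1) \<union> Pre (R0 + 1)"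
    have "compact K" unfolding K_def using Pre_c Dcl by (intro compact_Un closed_Int_compact) auto
    moreover have "K \<subseteq> D" unfolding K_def using Pre_sub by auto
    moreover have "v \<in> K" if "(t, j) \<in> Es" "v \<in> D" "norm (\<phi>s (t, j) - g v) < 1" for t j v
    proof -
      have "norm (g v) \<le> norm (\<phi>s (t, j)) + norm (\<phi>s (t, j) - g v)"
        using norm_triangle_ineq[of "\<phi>s (t, j)" "g v - \<phi>s (t, j)"] by (simp add: norm_minus_commute)
      then have "norm (g v) \<le> R0 + 1" using R0[OF that(1)] that(3) by simp
      then show ?thesis unfolding K_def using Pre_I that(2) by blast
    qed
    moreover have "u \<in> K" if "(t, j) \<in> Es" "u \<in> D" "norm (\<phi>s (t, j) - u) < 1" for t j u
    proof -
      have "norm u \<le> norm (\<phi>s (t, j)) + norm (\<phi>s (t, j) - u)"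
        using norm_triangle_ineq[of "\<phi>s (t, j)" "u - \<phi>s (t, j)"] by (simp add: norm_minus_commute)
      then have "norm u \<le> R0 + 1" using R0[OF that(1)] that(3) by simp
      then show ?thesis unfolding K_def using that(2) by auto
    qed
    ultimately show ?thesis using that[of K] by blast
  qed
  obtain R1 where R1: "R1 \<ge> 0" "\<And>x. x \<in> KD \<Longrightarrow> norm x \<le> R1" "\<And>x. x \<in> KD \<Longrightarrow> norm (g x) \<le> R1"
  proof -
    have "compact (g ` KD)" using compact_continuous_image[OF continuous_on_subset[OF gcont KDD] KDc] .
    then have "bounded (KD \<union> g ` KD)" using KDc by (simp add: compact_imp_bounded)
    then obtain B where B: "\<And>x. x \<in> KD \<union> g ` KD \<Longrightarrow> norm x \<le> B" unfolding bounded_iff by blast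
    show ?thesis
    proof (rule that[of "max B 0"])
      show "0 \<le> max B 0" by simp
      fix x assume "x \<in> KD"
      then show "norm x \<le> max B 0" "norm (g x) \<le> max B 0" using B[of x] B[of "g x"] by auto
    qed
  qed
  define KW where "KW = Pre (R1 + 1)"
  have KWc: "compact KW" unfolding KW_def by (rule Pre_c)
  obtain R where R: "R \<ge> R1" "\<And>x. x \<in> KW \<Longrightarrow> norm x \<le> R"
  proof -
    obtain B where B: "\<And>x. x \<in> KW \<Longrightarrow> norm x \<le> B" using compact_imp_bounded[OF KWc] unfolding bounded_iff by blast
    show ?thesis
    proof (rule that[of "max B R1"])
      show "R1 \<le> max B R1" by simp
      fix x assume "x \<in> KW"
      then show "norm x \<le> max B R1" using B[of x] by auto
    qed
  qed
  define KS where "KS = KD \<union> KW"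
  have KSc: "compact KS" unfolding KS_def using KDc KWc by blast
  have KSD: "KS \<subseteq> D" unfolding KS_def KW_def using KDD Pre_sub by blast
  define KG where "KG = g ` Pre (R + 3)"
  have KGc: "compact KG" unfolding KG_def
    using compact_continuous_image[OF continuous_on_subset[OF gcont Pre_sub] Pre_c] .
  obtain d2 where d2: "d2 > 0" "d2 \<le> 1"
    and sep: "\<And>a b. a \<in> KS \<Longrightarrow> b \<in> D \<Longrightarrow> norm (g b) \<le> R + 3 \<Longrightarrow> norm (a - g b) < d2 \<Longrightarrow> False"
  proof -
    have "KS \<inter> KG = {}" unfolding KG_def using KSD Pre_sub gD by blast
    then obtain \<delta>0 where \<delta>0: "\<delta>0 > 0" "\<forall>x\<in>KS. \<forall>y\<in>KG. \<delta>0 \<le> dist x y"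
      using separate_compact_closed[OF KSc compact_imp_closed[OF KGc]] by blast
    show ?thesis
    proof (rule that[of "min \<delta>0 1"])
      show "min \<delta>0 1 > 0" "min \<delta>0 1 \<le> 1" using \<delta>0 by auto
      fix a b assume ab: "a \<in> KS" "b \<in> D" "norm (g b) \<le> R + 3" "norm (a - g b) < min \<delta>0 1"
      have "g b \<in> KG" unfolding KG_def using Pre_I[OF ab(2,3)] by blast
      then show False using \<delta>0(2) ab(1,4) by (force simp: dist_norm)
    qed
  qed
  define KGD where "KGD = g ` KD"
  have KGDc: "compact KGD" unfolding KGD_def
    using compact_continuous_image[OF continuous_on_subset[OF gcont KDD] KDc] .
  define Kb where "Kb = D \<inter> cball 0 (R + 2)"
  have Kbc: "compact Kb" unfolding Kb_def using Dcl by (simp add: closed_Int_compact)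
  have "uniformly_continuous_on Kb g"
    using compact_uniformly_continuous[OF continuous_on_subset[OF gcont] Kbc] unfolding Kb_def by blast
  then obtain \<rho> where \<rho>: "\<rho> > 0" "\<And>w w'. w \<in> Kb \<Longrightarrow> w' \<in> Kb \<Longrightarrow> dist w' w < \<rho> \<Longrightarrow> dist (g w') (g w) < \<epsilon>1 / 2"
    unfolding uniformly_continuous_on_def using \<epsilon>1(1) by (metis half_gt_zero)
  obtain M where M: "M > 0" "\<And>z y. z \<in> C \<Longrightarrow> norm z \<le> (R + 2) + 1 \<Longrightarrow> y \<in> F z \<Longrightarrow> norm y \<le> M"
    using lb_bounded[OF lbF C, of "(R + 2) + 1"] by blast
  define \<tau>B where "\<tau>B = min (\<epsilon>1 / 2) (min (1 / (2 * M)) (\<rho> / (2 * M)))"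
  have \<tau>B: "\<tau>B > 0" "\<tau>B \<le> \<epsilon>1 / 2" "M * \<tau>B \<le> 1 / 2" "M * \<tau>B \<le> \<rho> / 2"
  proof -
    show "\<tau>B > 0" unfolding \<tau>B_def using \<epsilon>1 M \<rho> by simp
    show "\<tau>B \<le> \<epsilon>1 / 2" unfolding \<tau>B_def by simp
    have "M * \<tau>B \<le> M * (1 / (2 * M))" unfolding \<tau>B_def using M by (intro mult_left_mono) auto
    then show "M * \<tau>B \<le> 1 / 2" using M by simp
    have "M * \<tau>B \<le> M * (\<rho> / (2 * M))" unfolding \<tau>B_def using M by (intro mult_left_mono) auto
    then show "M * \<tau>B \<le> \<rho> / 2" using M by simp
  qed
  obtain \<delta>B where \<delta>B: "\<delta>B > 0" "\<And>f a b v. farc C F f a b \<Longrightarrow> a + \<tau>B \<le> b \<Longrightarrow> v \<in> KD \<Longrightarrow> \<delta>B \<le> norm (f a - v)"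
  proof -
    have "\<exists>\<delta>>0. \<forall>f a b v. farc C F f a b \<and> a + \<tau>B \<le> b \<and> v \<in> KD \<longrightarrow> \<delta> \<le> norm (f a - v)"
    proof (rule tang_fwd[OF C oscF lbF cvF KDc _ \<tau>B(1)])
      fix v assume "v \<in> KD" "v \<in> C"
      then have "v \<in> C \<inter> D" using KDD by blast
      then show "F v \<inter> tangent_cone C v = {}" using ii by blast
    qed
    then show ?thesis using that by blast
  qed
  define \<tau>L where "\<tau>L = min (1 / (2 * M)) (d2 / (4 * M))"
  have \<tau>L: "\<tau>L > 0" "M * \<tau>L \<le> 1 / 2" "M * \<tau>L \<le> d2 / 4"
  proof -
    show "\<tau>L > 0" unfolding \<tau>L_def using M d2 by simp
    have "M * \<tau>L \<le> M * (1 / (2 * M))" unfolding \<tau>L_def using M by (intro mult_left_mono) auto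
    then show "M * \<tau>L \<le> 1 / 2" using M by simp
    have "M * \<tau>L \<le> M * (d2 / (4 * M))" unfolding \<tau>L_def using M by (intro mult_left_mono) auto
    then show "M * \<tau>L \<le> d2 / 4" using M by simp
  qed
  define \<tau>C where "\<tau>C = min (\<tau>L / 2) (min (\<epsilon>1 / (8 * M)) (\<epsilon>1 / 4))"
  have \<tau>C: "\<tau>C > 0" "\<tau>C \<le> \<tau>L / 2" "M * \<tau>C \<le> \<epsilon>1 / 8" "\<tau>C \<le> \<epsilon>1 / 4" "M * \<tau>C \<le> d2 / 8" "M * \<tau>C \<le> 1 / 4"
  proof -
    show "\<tau>C > 0" unfolding \<tau>C_def using \<tau>L \<epsilon>1 M by simp
    show "\<tau>C \<le> \<tau>L / 2" "\<tau>C \<le> \<epsilon>1 / 4" unfolding \<tau>C_def by auto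
    have "M * \<tau>C \<le> M * (\<epsilon>1 / (8 * M))" unfolding \<tau>C_def using M by (intro mult_left_mono) auto
    then show "M * \<tau>C \<le> \<epsilon>1 / 8" using M by simp
    have "M * \<tau>C \<le> M * (\<tau>L / 2)" unfolding \<tau>C_def using M by (intro mult_left_mono) auto
    then show "M * \<tau>C \<le> d2 / 8" "M * \<tau>C \<le> 1 / 4" using \<tau>L by auto
  qed
  obtain \<delta>C where \<delta>C: "\<delta>C > 0" "\<And>f a b v. farc C F f a b \<Longrightarrow> a + \<tau>C \<le> b \<Longrightarrow> v \<in> KGD \<Longrightarrow> \<delta>C \<le> norm (f b - v)"
  proof -
    have "\<exists>\<delta>>0. \<forall>f a b v. farc C F f a b \<and> a + \<tau>C \<le> b \<and> v \<in> KGD \<longrightarrow> \<delta> \<le> norm (f b - v)"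
    proof (rule tang_bwd[OF C oscF lbF cvF KGDc _ \<tau>C(1)])
      fix v assume "v \<in> KGD" "v \<in> C"
      then have "v \<in> C \<inter> set_image G D" unfolding KGD_def using gimg KDD by blast
      then show "uminus ` F v \<inter> tangent_cone C v = {}" using iii by blast
    qed
    then show ?thesis using that by blast
  qed
  define s where "s = min (min (\<epsilon>1 / 4) (\<rho> / 2)) (min (min (d2 / 8) \<delta>B) (min \<delta>C 1))"
  have s: "s > 0" "s \<le> \<epsilon>1 / 4" "s \<le> \<rho> / 2" "s \<le> d2 / 8" "s \<le> \<delta>B" "s \<le> \<delta>C" "s \<le> 1"
    unfolding s_def using \<epsilon>1 \<rho> d2 \<delta>B \<delta>C by auto
  have HS: "hybrid_time_domain Es" using sol_htd[OF sol] .
  have monoS: "mono_dom Es" by (rule mono_sol[OF sol], erule exact, assumption+)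
  have setA_ne: "setA C D G \<noteq> {}"
  proof -
    have "\<phi>s (0, 0) \<in> C \<union> D" using sol unfolding is_solution_def by blast
    then have "(\<phi>s (0, 0), \<phi>s (0, 0)) \<in> setA C D G" unfolding setA_def by auto
    then show ?thesis by blast
  qed
  show "\<exists>s>0. \<forall>E \<phi>. is_solution C F D G E \<phi> \<and> t_complete E \<and>
            norm (\<phi>s (0, 0) - \<phi> (0, 0)) < s \<and>
            (\<forall>(t, j)\<in>Es. \<exists>j'. (t, j') \<in> E \<and> rhoA C D G (\<phi>s (t, j)) (\<phi> (t, j')) < s)
          \<longrightarrow> (\<forall>(t, j)\<in>Es. \<exists>(t', j')\<in>E. \<bar>t - t'\<bar> < \<epsilon> \<and> norm (\<phi>s (t, j) - \<phi> (t', j')) < \<epsilon>)"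
  proof (intro exI[of _ s] conjI allI impI s(1))
    fix E \<phi>
    assume H: "is_solution C F D G E \<phi> \<and> t_complete E \<and>
            norm (\<phi>s (0, 0) - \<phi> (0, 0)) < s \<and>
            (\<forall>(t, j)\<in>Es. \<exists>j'. (t, j') \<in> E \<and> rhoA C D G (\<phi>s (t, j)) (\<phi> (t, j')) < s)"
    then have solE: "is_solution C F D G E \<phi>" and tcE: "t_complete E" and init: "norm (\<phi>s (0, 0) - \<phi> (0, 0)) < s"
      and vi: "\<And>t j. (t, j) \<in> Es \<Longrightarrow> \<exists>j'. (t, j') \<in> E \<and> rhoA C D G (\<phi>s (t, j)) (\<phi> (t, j')) < s"
      by auto
    have HE: "hybrid_time_domain E" using sol_htd[OF solE] .
    have monoE: "mono_dom E" by (rule mono_sol[OF solE], erule exact, assumption+)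
    have main: "\<exists>t' j'. (t', j') \<in> E \<and> \<bar>t - t'\<bar> < \<epsilon>1 \<and> norm (\<phi>s (t, j) - \<phi> (t', j')) < \<epsilon>1"
      if tj: "(t, j) \<in> Es" for t j
    proof -
      define x where "x = \<phi>s (t, j)"
      obtain j' where j': "(t, j') \<in> E" "rhoA C D G x (\<phi> (t, j')) < s" using vi[OF tj] unfolding x_def by blast
      define y where "y = \<phi> (t, j')"
      obtain u v where uv: "(u, v) \<in> setA C D G" "norm (x - u) < s" "norm (y - v) < s"
        using rho_lt[OF j'(2)[folded y_def] setA_ne] by blast
      have "u = v \<or> (v \<in> D \<and> u \<in> G v) \<or> (u \<in> D \<and> v \<in> G u)" using uv(1) unfolding setA_def by auto
      then consider (A) "u = v" | (B) "v \<in> D" "u = g v" | (C) "u \<in> D" "v = g u" using Gs by blast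
      then show ?thesis
      proof cases
        case A
        have "norm (x - y) \<le> norm (x - u) + norm (y - v)"
          using norm_triangle_ineq[of "x - u" "v - y"] A by (simp add: norm_minus_commute)
        also have "\<dots> < \<epsilon>1" using uv s by simp
        finally show ?thesis using j'(1) \<epsilon>1(1) unfolding x_def y_def by (intro exI[of _ t] exI[of _ j']) auto
      next
        case B
        have vKD: "v \<in> KD" using P1[OF tj B(1)] uv(2) s B(2) unfolding x_def by simp
        have nv: "norm v \<le> R1" using R1(2)[OF vKD] .
        have ny: "norm y \<le> R + 2"
          using norm_triangle_ineq[of v "y - v"] uv(3) s nv R(1) by simp
        have bd: "t' < t + \<tau>B" if t': "(t', j') \<in> E" for t'
        proof (rule ccontr)
          assume "\<not> t' < t + \<tau>B"
          then have tB: "(t + \<tau>B, j') \<in> E" using Ij_convex[OF HE j'(1) t', of "t + \<tau>B"] \<tau>B by simp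
          have "farc C F (\<lambda>r. \<phi> (r, j')) t (t + \<tau>B)" using sol_arc[OF solE j'(1) tB] \<tau>B by simp
          from \<delta>B(2)[OF this order_refl vKD] have "\<delta>B \<le> norm ((\<lambda>r. \<phi> (r, j')) t - v)" .
          then have "\<delta>B \<le> norm (y - v)" unfolding y_def by simp
          then show False using uv(3) s by simp
        qed
        obtain b' where b': "t \<le> b'" "(b', j') \<in> E" "(b', Suc j') \<in> E"
          using htd_next[OF HE tcE monoE j'(1) bd] by blast
        have b'lt: "b' < t + \<tau>B" using bd[OF b'(2)] .
        define w where "w = \<phi> (b', j')"
        have wD: "w \<in> D" and gw: "\<phi> (b', Suc j') = g w" using jump[OF solE b'(2,3)] unfolding w_def by auto
        have arc: "farc C F (\<lambda>r. \<phi> (r, j')) t b'" using sol_arc[OF solE j'(1) b'(2) b'(1)] .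
        have Mb: "M * (b' - t) \<le> M * \<tau>B" using b'lt M(1) by (intro mult_left_mono) auto
        have "norm (w - y) \<le> M * (b' - t)"
          using esc_fwd[where R="R + 2", OF M(2) M(1) arc] ny Mb \<tau>B(3) unfolding w_def y_def by simp
        then have wy: "norm (w - y) \<le> M * \<tau>B" using Mb by simp
        have wv: "norm (w - v) < \<rho>"
          using norm_triangle_ineq[of "w - y" "y - v"] wy uv(3) \<tau>B(4) s(3) by simp
        have wv1: "norm (w - v) \<le> 3 / 2"
          using norm_triangle_ineq[of "w - y" "y - v"] wy uv(3) \<tau>B(3) s(7) by simp
        have nw: "norm w \<le> R + 2" using norm_triangle_ineq[of v "w - v"] wv1 nv R(1) by simp
        have wKb: "w \<in> Kb" and vKb: "v \<in> Kb" unfolding Kb_def using wD nw B(1) nv R(1) R1(1) by auto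
        have "dist (g w) (g v) < \<epsilon>1 / 2" using \<rho>(2)[OF vKb wKb] wv by (simp add: dist_norm)
        then have "norm (x - g w) < \<epsilon>1"
          using norm_triangle_ineq[of "x - g v" "g v - g w"] uv(2) B(2) s(2) \<epsilon>1
          by (simp add: dist_norm norm_minus_commute)
        moreover have "\<bar>t - b'\<bar> < \<epsilon>1" using b'(1) b'lt \<tau>B(2) \<epsilon>1 by simp
        ultimately show ?thesis using b'(3) gw unfolding x_def by (intro exI[of _ b'] exI[of _ "Suc j'"]) auto
      next
        case C
        have uKD: "u \<in> KD" using P2[OF tj C(1)] uv(2) s unfolding x_def by simp
        have nu: "norm u \<le> R1" and ngu: "norm (g u) \<le> R1" using R1 uKD by auto
        have nx: "norm x \<le> R + 2" using nrm_le[of x u] uv(2) s(7) nu R(1) by (simp add: norm_minus_commute)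
        have ny1: "norm y \<le> R1 + s" using nrm_le[of y "g u"] uv(3) C(2) ngu by simp
        have ny: "norm y \<le> R + 2" using ny1 s(7) R(1) by simp
        have uKS: "u \<in> KS" unfolding KS_def using uKD by simp
        have guKGD: "g u \<in> KGD" unfolding KGD_def using uKD by simp
        obtain as where as: "as \<le> t" "(as, j) \<in> Es" "\<forall>t'. (t', j) \<in> Es \<longrightarrow> as \<le> t'" "j = 0 \<longrightarrow> as = 0"
            "0 < j \<longrightarrow> (as, j - 1) \<in> Es"
          using htd_prev[OF HS tj] by blast
        have as0: "0 \<le> as" using htd_nonneg[OF HS as(2)] .
        have arcS: "farc C F (\<lambda>r. \<phi>s (r, j)) r1 t" if "(r1, j) \<in> Es" "r1 \<le> t" for r1
          using sol_arc[OF sol that(1) tj that(2)] .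
        have escS: "norm (x - \<phi>s (r1, j)) \<le> M * (t - r1)" if "(r1, j) \<in> Es" "r1 \<le> t" "M * (t - r1) < 1" for r1
          using esc_bwd[where R="R + 2", OF M(2) M(1) arcS[OF that(1,2)]] nx that(3) unfolding x_def by simp
        have land: "\<tau>L \<le> t - as" if jp: "0 < j"
        proof (rule ccontr)
          assume "\<not> \<tau>L \<le> t - as"
          then have lt: "t - as < \<tau>L" by simp
          have j1: "(as, j - 1) \<in> Es" "(as, Suc (j - 1)) \<in> Es" using as(2,5) jp by auto
          define l0 where "l0 = \<phi>s (as, j - 1)"
          have l0D: "l0 \<in> D" and l0g: "\<phi>s (as, j) = g l0" using jump[OF sol j1] jp unfolding l0_def by auto
          have "M * (t - as) \<le> M * \<tau>L" using lt M(1) by (intro mult_left_mono) auto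
          then have "norm (x - g l0) \<le> d2 / 4" using escS[OF as(2,1)] \<tau>L l0g by simp
          then have ul: "norm (u - g l0) < d2" using tri[of u "g l0" x] uv(2) s(4) d2(1) by (simp add: norm_minus_commute)
          have "norm (g l0) \<le> R + 3" using nrm_le[of "g l0" u] ul d2(2) nu R(1) by (simp add: norm_minus_commute)
          then show False using sep[OF uKS l0D _ ul] by simp
        qed
        show ?thesis
        proof (cases "t < \<tau>C")
          case True
          have j0: "j = 0"
          proof (rule ccontr)
            assume "j \<noteq> 0"
            then have "\<tau>L \<le> t - as" using land by simp
            then show False using True as0 \<tau>C(2) \<tau>L(1) by simp
          qed
          have as00: "as = 0" using as(4) j0 by simp
          have t0: "0 \<le> t" using htd_nonneg[OF HS tj] .
          have "M * (t - 0) \<le> M * \<tau>C" using True M(1) by (intro mult_left_mono) auto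
          then have "norm (x - \<phi>s (0, 0)) \<le> \<epsilon>1 / 8"
            using escS[of 0] as(2) as00 j0 t0 \<tau>C(3) \<tau>C(6) by simp
          then have "norm (x - \<phi> (0, 0)) < \<epsilon>1"
            using tri[of x "\<phi> (0, 0)" "\<phi>s (0, 0)"] init s(2) \<epsilon>1(1) by simp
          moreover have "(0, 0) \<in> E" using solE unfolding is_solution_def by blast
          moreover have "\<bar>t - 0\<bar> < \<epsilon>1" using True t0 \<tau>C(4) \<epsilon>1(1) by simp
          ultimately show ?thesis unfolding x_def by blast
        next
          case False
          then have tC: "\<tau>C \<le> t" by simp
          obtain a' where a': "a' \<le> t" "(a', j') \<in> E" "\<forall>t'. (t', j') \<in> E \<longrightarrow> a' \<le> t'" "j' = 0 \<longrightarrow> a' = 0"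
              "0 < j' \<longrightarrow> (a', j' - 1) \<in> E"
            using htd_prev[OF HE j'(1)] by blast
          have a'0: "0 \<le> a'" using htd_nonneg[OF HE a'(2)] .
          have arcE: "farc C F (\<lambda>r. \<phi> (r, j')) a' t" using sol_arc[OF solE a'(2) j'(1) a'(1)] .
          have ta': "t - a' < \<tau>C"
          proof (rule ccontr)
            assume "\<not> t - a' < \<tau>C"
            then have "a' + \<tau>C \<le> t" by simp
            from \<delta>C(2)[OF arcE this guKGD] have "\<delta>C \<le> norm (y - v)" using C(2) unfolding y_def by simp
            then show False using uv(3) s(6) by simp
          qed
          have j'p: "0 < j'"
          proof (rule ccontr)
            assume "\<not> 0 < j'"
            then have "a' = 0" using a'(4) by simp
            then show False using ta' tC by simp
          qed
          define k where "k = j' - 1"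
          have kk: "Suc k = j'" unfolding k_def using j'p by simp
          have a'k: "(a', k) \<in> E" using a'(5) j'p unfolding k_def by simp
          define w where "w = \<phi> (a', k)"
          have wD: "w \<in> D" and gw: "\<phi> (a', j') = g w" using jump[OF solE a'k] kk a'(2) unfolding w_def by auto
          have Mta: "M * (t - a') \<le> M * \<tau>C" using ta' M(1) by (intro mult_left_mono) auto
          have "norm (y - g w) \<le> M * (t - a')"
            using esc_bwd[where R="R + 2", OF M(2) M(1) arcE] ny Mta \<tau>C(6) gw unfolding y_def by simp
          then have ygw: "norm (y - g w) \<le> M * \<tau>C" using Mta by simp
          have ngw: "norm (g w) \<le> R1 + 1"
            using nrm_le[of "g w" y] ygw ny1 s(2) \<tau>C(3) \<epsilon>1(3) by (simp add: norm_minus_commute)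
          have wKW: "w \<in> KW" unfolding KW_def using Pre_I[OF wD ngw] .
          have nw: "norm w \<le> R" using R(2)[OF wKW] .
          have wKS: "w \<in> KS" unfolding KS_def using wKW by simp
          obtain a'' where a'': "a'' \<le> a'" "(a'', k) \<in> E" "k = 0 \<longrightarrow> a'' = 0" "0 < k \<longrightarrow> (a'', k - 1) \<in> E"
            using htd_prev[OF HE a'k] by blast
          have a''0: "0 \<le> a''" using htd_nonneg[OF HE a''(2)] .
          have a''lt: "a'' < a'"
          proof (rule ccontr)
            assume "\<not> a'' < a'"
            then have eq: "a'' = a'" using a''(1) by simp
            show False
            proof (cases "k = 0")
              case True
              then have "a' = 0" using a''(3) eq by simp
              then show False using ta' tC by simp
            next
              case False
              then have kk1: "(a', k - 1) \<in> E" "(a', Suc (k - 1)) \<in> E" using a''(4) eq a'k by auto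
              have "w = g (\<phi> (a', k - 1))" "\<phi> (a', k - 1) \<in> D" using jump[OF solE kk1] False unfolding w_def by auto
              then show False using gD wD by metis
            qed
          qed
          define t'' where "t'' = a' - min (a' - a'') \<tau>C / 2"
          have t''1: "a'' < t''" "t'' < a'" "a' - t'' \<le> \<tau>C / 2"
          proof -
            have m: "min (a' - a'') \<tau>C > 0" "min (a' - a'') \<tau>C \<le> a' - a''" "min (a' - a'') \<tau>C \<le> \<tau>C"
              using a''lt \<tau>C(1) by auto
            obtain mm where mm: "mm = min (a' - a'') \<tau>C" by blast
            have t''e: "t'' = a' - mm / 2" unfolding t''_def mm ..
            show "a'' < t''" unfolding t''e using m unfolding mm[symmetric] by linarith
            show "t'' < a'" unfolding t''e using m unfolding mm[symmetric] by linarith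
            show "a' - t'' \<le> \<tau>C / 2" unfolding t''e using m unfolding mm[symmetric] by linarith
          qed
          have t''2: "t - t'' < 2 * \<tau>C" using t''1(3) ta' \<tau>C(1) by linarith
          have t''k: "(t'', k) \<in> E" using Ij_convex[OF HE a''(2) a'k] t''1 by simp
          have arck: "farc C F (\<lambda>r. \<phi> (r, k)) t'' a'" using sol_arc[OF solE t''k a'k] t''1 by simp
          have "M * (a' - t'') \<le> M * \<tau>C" using t''1 \<tau>C(1) M(1) by (intro mult_left_mono) auto
          then have wq: "norm (w - \<phi> (t'', k)) \<le> M * \<tau>C"
          proof -
            have "norm ((\<lambda>r. \<phi> (r, k)) a') \<le> R + 2" using nw unfolding w_def by simp
            moreover have "M * (a' - t'') < 1" using \<open>M * (a' - t'') \<le> M * \<tau>C\<close> \<tau>C(6) by simp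
            ultimately have "norm ((\<lambda>r. \<phi> (r, k)) a' - (\<lambda>r. \<phi> (r, k)) t'') \<le> M * (a' - t'')"
              using esc_bwd[where R="R + 2", OF M(2) M(1) arck] by simp
            then show ?thesis using \<open>M * (a' - t'') \<le> M * \<tau>C\<close> unfolding w_def by simp
          qed
          have ast'': "as \<le> t''"
          proof (cases "j = 0")
            case True then show ?thesis using as(4) a''0 t''1 by simp
          next
            case False
            then have "\<tau>L \<le> t - as" using land by simp
            then show ?thesis using t''2 \<tau>C(2) by simp
          qed
          have t''j: "(t'', j) \<in> Es" using Ij_convex[OF HS as(2) tj ast''] t''1 a'(1) by simp
          have M2: "M * (t - t'') \<le> M * (2 * \<tau>C)" using t''2 M(1) by (intro mult_left_mono) auto
          have xp: "norm (x - \<phi>s (t'', j)) \<le> 2 * (M * \<tau>C)"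
            using escS[OF t''j] t''1 a'(1) M2 \<tau>C(6) by simp
          obtain k3 where k3: "(t'', k3) \<in> E" "rhoA C D G (\<phi>s (t'', j)) (\<phi> (t'', k3)) < s" using vi[OF t''j] by blast
          have k3k: "k3 = k"
          proof (rule ccontr)
            assume "k3 \<noteq> k"
            then have "k3 < k \<or> k < k3" by auto
            then show False
            proof
              assume "k3 < k"
              then have "t'' \<le> a''" using monoE k3(1) a''(2) unfolding mono_dom_def by blast
              then show False using t''1 by simp
            next
              assume "k < k3"
              then have "a' \<le> t''" using monoE k3(1) a'k unfolding mono_dom_def by blast
              then show False using t''1 by simp
            qed
          qed
          define p where "p = \<phi>s (t'', j)"
          define q where "q = \<phi> (t'', k)"
          obtain u3 v3 where uv3: "(u3, v3) \<in> setA C D G" "norm (p - u3) < s" "norm (q - v3) < s"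
            using rho_lt[OF k3(2)[unfolded k3k, folded p_def q_def] setA_ne] by blast
          have "u3 = v3 \<or> (v3 \<in> D \<and> u3 \<in> G v3) \<or> (u3 \<in> D \<and> v3 \<in> G u3)" using uv3(1) unfolding setA_def by auto
          then consider (A3) "u3 = v3" | (B3) "v3 \<in> D" "u3 = g v3" | (C3) "u3 \<in> D" "v3 = g u3" using Gs by blast
          then show ?thesis
          proof cases
            case A3
            have "norm (x - q) \<le> norm (x - p) + norm (p - q)" by (rule tri)
            also have "norm (p - q) \<le> norm (p - u3) + norm (u3 - q)" by (rule tri)
            finally have "norm (x - q) \<le> norm (x - p) + norm (p - u3) + norm (q - v3)"
              using A3 by (simp add: norm_minus_commute)
            then have "norm (x - q) < \<epsilon>1" using xp uv3(2,3) \<tau>C(3) s(2) \<epsilon>1(1) unfolding p_def by linarith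
            moreover have "\<bar>t - t''\<bar> < \<epsilon>1" using t''1 t''2 a'(1) \<tau>C(4) \<epsilon>1(1) by simp
            ultimately show ?thesis using t''k unfolding x_def q_def by blast
          next
            case B3
            have "norm (u - g v3) \<le> norm (u - x) + norm (x - g v3)" by (rule tri)
            also have "norm (x - g v3) \<le> norm (x - p) + norm (p - g v3)" by (rule tri)
            finally have "norm (u - g v3) \<le> norm (x - u) + norm (x - p) + norm (p - u3)"
              using B3 by (simp add: norm_minus_commute)
            then have ug: "norm (u - g v3) < d2" using xp uv(2) uv3(2) \<tau>C(5) s(4) d2(1) unfolding p_def by linarith
            have "norm (g v3) \<le> R + 3" using nrm_le[of "g v3" u] ug d2(2) nu R(1) by (simp add: norm_minus_commute)
            then show ?thesis using sep[OF uKS B3(1) _ ug] by simp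
          next
            case C3
            have "norm (w - g u3) \<le> norm (w - q) + norm (q - g u3)" by (rule tri)
            then have wg: "norm (w - g u3) < d2" using wq uv3(3) C3 \<tau>C(5) s(4) d2(1) unfolding q_def by (simp add: norm_minus_commute)
            have "norm (g u3) \<le> R + 3" using nrm_le[of "g u3" w] wg d2(2) nw by (simp add: norm_minus_commute)
            then show ?thesis using sep[OF wKS C3(1) _ wg] by simp
          qed
        qed
      qed
    qed
    show "\<forall>(t, j)\<in>Es. \<exists>(t', j')\<in>E. \<bar>t - t'\<bar> < \<epsilon> \<and> norm (\<phi>s (t, j) - \<phi> (t', j')) < \<epsilon>"
    proof (intro ballI)
      fix p assume p: "p \<in> Es"
      obtain t j where tj: "p = (t, j)" by (cases p)
      obtain t' j' where "(t', j') \<in> E" "\<bar>t - t'\<bar> < \<epsilon>1" "norm (\<phi>s (t, j) - \<phi> (t', j')) < \<epsilon>1"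
        using main[of t j] p tj by blast
      then show "case p of (t, j) \<Rightarrow> \<exists>(t', j')\<in>E. \<bar>t - t'\<bar> < \<epsilon> \<and> norm (\<phi>s (t, j) - \<phi> (t', j')) < \<epsilon>"
        using tj \<epsilon>1 by (intro case_prodI2) force
    qed
  qed
qed

end
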